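(* Let $U\neq0$, $2\le k<\lfloor L/2\rfloor$, and let $F_k$ be a $k$-local conserved quantity of the one-dimensional Hubbard model. For $\sigma,\mu\in\{\uparrow,\downarrow\}$ and $s\in\{+,-\}$, let $q_i^{\sigma,s;\mu,-s}$ denote the $k$-support basis element starting at site $i$ whose only non-identity factors are $e_{i,\sigma}=c^{s}_{i,\sigma}$ and $e_{i+k-1,\mu}=c^{-s}_{i+k-1,\mu}$, where $c^+=c^\dagger$, $c^-=c$. Then the coefficient of $q_i^{\sigma,s;\mu,-s}$ in $F_k$ does not depend on $i$.
   Context: Fermionic operators $c_{j,\sigma},c^\dagger_{j,\sigma}$, $j\in\{1,\dots,L\}$ with indices modulo $L$ (periodic boundary conditions), $\sigma\in\{\uparrow,\downarrow\}$, with canonical anticommutation relations; $n_{j,\sigma}=c^\dagger_{j,\sigma}c_{j,\sigma}$, $z_{j,\sigma}=2n_{j,\sigma}-1$. Hubbard Hamiltonian: $H=-2\sum_j\sum_\sigma(c^\dagger_{j,\sigma}c_{j+1,\sigma}+c^\dagger_{j+1,\sigma}c_{j,\sigma})+4U\sum_j(n_{j,\uparrow}-\tfrac12)(n_{j,\downarrow}-\tfrac12)$. An $l$-support basis element starting at site $i$ is $(e_{i,\uparrow}\cdots e_{i+l-1,\uparrow})(e_{i,\downarrow}\cdots e_{i+l-1,\downarrow})$ (in exactly this operator order) with $e_{j,\sigma}\in\{c_{j,\sigma},c^\dagger_{j,\sigma},z_{j,\sigma},I\}$, $(e_{i,\uparrow},e_{i,\downarrow})\neq(I,I)$, $(e_{i+l-1,\uparrow},e_{i+l-1,\downarrow})\neq(I,I)$.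 A $k$-local conserved quantity is $F_k=\sum_{l=1}^k\sum_{i=1}^L\sum_e c_e\,e$ (inner sum over $l$-support basis elements starting at $i$) with $[F_k,H]=0$ and some nonzero coefficient on a $k$-support basis element. *)

theory Defs
  imports Complex_Main
begin

text \<open>Fermionic Fock space of the L-site Hubbard chain with 2L modes.
Basis states are occupation sets S \<subseteq> {0..<2L}; operators are matrices
indexed by such sets (entries outside the Fock space are zero).
Annihilation/creation operators are given by the Jordan-Wigner construction.\<close>

datatype spin = Up | Dn

type_synonym op = "nat set \<Rightarrow> nat set \<Rightarrow> complex"

definition modes :: "nat \<Rightarrow> nat set" where
  "modes L = {0..<2*L}"

definition mode :: "nat \<Rightarrow> nat \<Rightarrow> spin \<Rightarrow> nat" where
  "mode L j s = 2 * (j mod L) + (if s = Up then 0 else 1)"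

definition jw_sign :: "nat set \<Rightarrow> nat \<Rightarrow> complex" where
  "jw_sign S m = (-1) ^ card {m' \<in> S. m' < m}"

definition op_id :: "nat \<Rightarrow> op" where
  "op_id L x y = (if x \<subseteq> modes L \<and> y \<subseteq> modes L \<and> x = y then 1 else 0)"

definition op_zero :: op where "op_zero x y = 0"

definition op_add :: "op \<Rightarrow> op \<Rightarrow> op" where
  "op_add A B x y = A x y + B x y"

definition op_smult :: "complex \<Rightarrow> op \<Rightarrow> op" where
  "op_smult a A x y = a * A x y"

definition op_mult :: "nat \<Rightarrow> op \<Rightarrow> op \<Rightarrow> op" where
  "op_mult L A B x y = (\<Sum>z\<in>Pow (modes L). A x z * B z y)"

definition op_sum :: "('i \<Rightarrow> op) \<Rightarrow> 'i set \<Rightarrow> op" where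
  "op_sum f I x y = (\<Sum>i\<in>I. f i x y)"

definition op_prod :: "nat \<Rightarrow> op list \<Rightarrow> op" where
  "op_prod L As = foldr (op_mult L) As (op_id L)"

definition cann :: "nat \<Rightarrow> nat \<Rightarrow> spin \<Rightarrow> op" where
  "cann L j s x y = (let m = mode L j s in
     if x \<subseteq> modes L \<and> y \<subseteq> modes L \<and> m \<in> y \<and> x = y - {m} then jw_sign y m else 0)"

definition ccre :: "nat \<Rightarrow> nat \<Rightarrow> spin \<Rightarrow> op" where
  "ccre L j s x y = (let m = mode L j s in
     if x \<subseteq> modes L \<and> y \<subseteq> modes L \<and> m \<notin> y \<and> x = insert m y then jw_sign y m else 0)"

definition num :: "nat \<Rightarrow> nat \<Rightarrow> spin \<Rightarrow> op" where
  "num L j s = op_mult L (ccre L j s) (cann L j s)"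

definition zop :: "nat \<Rightarrow> nat \<Rightarrow> spin \<Rightarrow> op" where
  "zop L j s = op_add (op_smult 2 (num L j s)) (op_smult (-1) (op_id L))"

definition hubbard :: "nat \<Rightarrow> real \<Rightarrow> op" where
  "hubbard L U = op_add
     (op_smult (-2) (op_sum (\<lambda>(j, s). op_add (op_mult L (ccre L j s) (cann L (j+1) s))
                                              (op_mult L (ccre L (j+1) s) (cann L j s)))
                     ({1..L} \<times> UNIV)))
     (op_smult (4 * complex_of_real U)
        (op_sum (\<lambda>j. op_mult L (op_add (num L j Up) (op_smult (-1/2) (op_id L)))
                                 (op_add (num L j Dn) (op_smult (-1/2) (op_id L)))) {1..L}))"

datatype fop = FC | FCd | FZ | FI

definition fop_op :: "nat \<Rightarrow> fop \<Rightarrow> nat \<Rightarrow> spin \<Rightarrow> op" where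
  "fop_op L f j s = (case f of FC \<Rightarrow> cann L j s | FCd \<Rightarrow> ccre L j s | FZ \<Rightarrow> zop L j s | FI \<Rightarrow> op_id L)"

text \<open>A label \<epsilon> t s gives the factor at site i+t, spin s (t = 0..l-1).
Valid l-support labels: identity beyond offset l-1, non-identity pair at both ends.\<close>
definition valid_label :: "nat \<Rightarrow> (nat \<Rightarrow> spin \<Rightarrow> fop) \<Rightarrow> bool" where
  "valid_label l \<epsilon> \<longleftrightarrow> (\<forall>t\<ge>l. \<forall>s. \<epsilon> t s = FI)
      \<and> (\<epsilon> 0 Up \<noteq> FI \<or> \<epsilon> 0 Dn \<noteq> FI)
      \<and> (\<epsilon> (l-1) Up \<noteq> FI \<or> \<epsilon> (l-1) Dn \<noteq> FI)"

definition basis_elem :: "nat \<Rightarrow> nat \<Rightarrow> nat \<Rightarrow> (nat \<Rightarrow> spin \<Rightarrow> fop) \<Rightarrow> op" where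
  "basis_elem L l i \<epsilon> = op_prod L
     (map (\<lambda>t. fop_op L (\<epsilon> t Up) (i+t) Up) [0..<l] @
      map (\<lambda>t. fop_op L (\<epsilon> t Dn) (i+t) Dn) [0..<l])"

definition local_op :: "nat \<Rightarrow> nat \<Rightarrow> (nat \<Rightarrow> nat \<Rightarrow> (nat \<Rightarrow> spin \<Rightarrow> fop) \<Rightarrow> complex) \<Rightarrow> op" where
  "local_op L k coef = op_sum (\<lambda>(l, i, \<epsilon>). op_smult (coef l i \<epsilon>) (basis_elem L l i \<epsilon>))
     {(l, i, \<epsilon>). l \<in> {1..k} \<and> i \<in> {1..L} \<and> valid_label l \<epsilon>}"

definition is_conserved_local :: "nat \<Rightarrow> real \<Rightarrow> nat \<Rightarrow> (nat \<Rightarrow> nat \<Rightarrow> (nat \<Rightarrow> spin \<Rightarrow> fop) \<Rightarrow> complex) \<Rightarrow> bool" where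
  "is_conserved_local L U k coef \<longleftrightarrow>
     op_mult L (local_op L k coef) (hubbard L U) = op_mult L (hubbard L U) (local_op L k coef)
     \<and> (\<exists>i\<in>{1..L}. \<exists>\<epsilon>. valid_label k \<epsilon> \<and> coef k i \<epsilon> \<noteq> 0)"

text \<open>Label of q_i^{\<sigma>,s;\<mu>,-s}: c^s at (offset 0, \<sigma>), c^{-s} at (offset k-1, \<mu>).
The sign s is encoded as a bool: True = + (creation), False = - (annihilation).\<close>
definition cs :: "bool \<Rightarrow> fop" where "cs b = (if b then FCd else FC)"

definition q_label :: "nat \<Rightarrow> spin \<Rightarrow> bool \<Rightarrow> spin \<Rightarrow> nat \<Rightarrow> spin \<Rightarrow> fop" where
  "q_label k \<sigma> b \<mu> t s =
     (if t = 0 \<and> s = \<sigma> then cs b else if t = k - 1 \<and> s = \<mu> then cs (\<not> b) else FI)"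

end

theory Submission
  imports Defs
begin


lemma jw_sq: "jw_sign S m * jw_sign S m = 1"
  unfolding jw_sign_def by (simp flip: power_add)

lemma jw_insert: "u \<notin> S \<Longrightarrow> jw_sign (insert u S) m = (if u < m then -1 else 1) * jw_sign S m"
proof -
  assume u: "u \<notin> S"
  have fin: "finite {m' \<in> S. m' < m}" by (rule finite_subset[of _ "{..<m}"]) auto
  show ?thesis
  proof (cases "u < m")
    case True
    have "{m' \<in> insert u S. m' < m} = insert u {m' \<in> S. m' < m}" using True by auto
    then show ?thesis using True u fin by (simp add: jw_sign_def)
  next
    case False
    have "{m' \<in> insert u S. m' < m} = {m' \<in> S. m' < m}" using False by auto
    then show ?thesis using False by (simp add: jw_sign_def)
  qed
qed

lemma jw_insert_self: "jw_sign (insert m S) m = jw_sign S m"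
proof -
  have "{m' \<in> insert m S. m' < m} = {m' \<in> S. m' < m}" by auto
  then show ?thesis by (simp add: jw_sign_def)
qed

lemma jw_remove_self: "jw_sign (S - {m}) m = jw_sign S m"
proof -
  have "{m' \<in> S - {m}. m' < m} = {m' \<in> S. m' < m}" by auto
  then show ?thesis by (simp add: jw_sign_def)
qed


lemma finite_modes[simp]: "finite (modes L)" by (simp add: modes_def)

definition mop :: "nat \<Rightarrow> (nat set \<Rightarrow> nat set) \<Rightarrow> (nat set \<Rightarrow> complex) \<Rightarrow> op" where
  "mop L g w x y = (if y \<subseteq> modes L \<and> x = g y then w y else 0)"

lemma mop_mult:
  assumes "\<And>y. y \<subseteq> modes L \<Longrightarrow> g2 y \<subseteq> modes L"
  shows "op_mult L (mop L g1 w1) (mop L g2 w2) = mop L (g1 \<circ> g2) (\<lambda>y. w1 (g2 y) * w2 y)"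
proof (intro ext)
  fix x y
  show "op_mult L (mop L g1 w1) (mop L g2 w2) x y = mop L (g1 \<circ> g2) (\<lambda>y. w1 (g2 y) * w2 y) x y"
  proof (cases "y \<subseteq> modes L")
    case False thus ?thesis by (simp add: op_mult_def mop_def)
  next
    case True
    have "op_mult L (mop L g1 w1) (mop L g2 w2) x y
        = (\<Sum>z\<in>Pow (modes L). if z = g2 y then mop L g1 w1 x z * w2 y else 0)"
      unfolding op_mult_def by (intro sum.cong) (auto simp: mop_def True)
    also have "\<dots> = mop L g1 w1 x (g2 y) * w2 y" using assms True by simp
    finally show ?thesis using assms True by (simp add: mop_def)
  qed
qed

lemma mop_add: "op_add (mop L g w1) (mop L g w2) = mop L g (\<lambda>y. w1 y + w2 y)"
  by (intro ext) (simp add: op_add_def mop_def)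

lemma mop_smult: "op_smult c (mop L g w) = mop L g (\<lambda>y. c * w y)"
  by (intro ext) (simp add: op_smult_def mop_def)

lemma mop_cong: "(\<And>y. y \<subseteq> modes L \<Longrightarrow> w y = w' y) \<Longrightarrow>
   (\<And>y. y \<subseteq> modes L \<Longrightarrow> w y \<noteq> 0 \<Longrightarrow> g y = g' y) \<Longrightarrow> mop L g w = mop L g' w'"
  by (intro ext) (auto simp: mop_def)

lemma op_id_mop: "op_id L = mop L id (\<lambda>_. 1)"
  by (intro ext) (auto simp: op_id_def mop_def)

definition fg :: "fop \<Rightarrow> nat \<Rightarrow> nat set \<Rightarrow> nat set" where
  "fg f m y = (case f of FC \<Rightarrow> y - {m} | FCd \<Rightarrow> insert m y | _ \<Rightarrow> y)"

definition fw :: "fop \<Rightarrow> nat \<Rightarrow> nat set \<Rightarrow> complex" where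
  "fw f m y = (case f of FC \<Rightarrow> if m \<in> y then jw_sign y m else 0
     | FCd \<Rightarrow> if m \<notin> y then jw_sign y m else 0
     | FZ \<Rightarrow> if m \<in> y then 1 else -1 | FI \<Rightarrow> 1)"

lemma mode_lt: "0 < L \<Longrightarrow> mode L j s < 2 * L"
proof -
  assume "0 < L"
  then have "j mod L < L" by simp
  then show ?thesis by (simp add: mode_def)
qed

lemma mode_in: "0 < L \<Longrightarrow> mode L j s \<in> modes L"
  using mode_lt by (simp add: modes_def)

lemma cann_mop: "cann L j s = mop L (fg FC (mode L j s)) (fw FC (mode L j s))"
  by (intro ext) (auto simp: cann_def mop_def fg_def fw_def Let_def)

lemma ccre_mop: "0 < L \<Longrightarrow> ccre L j s = mop L (fg FCd (mode L j s)) (fw FCd (mode L j s))"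
  by (intro ext) (auto simp: ccre_def mop_def fg_def fw_def Let_def dest: mode_in)

lemma num_mop: "0 < L \<Longrightarrow> num L j s = mop L id (\<lambda>y. if mode L j s \<in> y then 1 else 0)"
proof -
  assume L: "0 < L"
  define m where "m = mode L j s"
  have "num L j s = mop L (fg FCd m \<circ> fg FC m) (\<lambda>y. fw FCd m (fg FC m y) * fw FC m y)"
    unfolding num_def m_def using L by (simp add: ccre_mop cann_mop, intro mop_mult) (auto simp: fg_def)
  also have "\<dots> = mop L id (\<lambda>y. if m \<in> y then 1 else 0)"
    by (rule mop_cong) (auto simp: fg_def fw_def jw_remove_self jw_sq split: if_splits)
  finally show ?thesis by (simp add: m_def)
qed

lemma zop_mop: "0 < L \<Longrightarrow> zop L j s = mop L id (\<lambda>y. if mode L j s \<in> y then 1 else -1)"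
  by (simp add: zop_def num_mop op_id_mop mop_smult mop_add) (rule mop_cong, auto)

lemma fg_diag[simp]: "fg FZ m = (\<lambda>y. y)" "fg FI m = (\<lambda>y. y)"
  by (rule ext, simp add: fg_def)+

lemma fw_diag[simp]: "fw FZ m = (\<lambda>y. if m \<in> y then 1 else -1)" "fw FI m = (\<lambda>y. 1)"
  by (rule ext, simp add: fw_def)+

lemma fop_op_mop: "0 < L \<Longrightarrow> fop_op L f j s = mop L (fg f (mode L j s)) (fw f (mode L j s))"
  by (cases f) (simp_all add: fop_op_def cann_mop ccre_mop zop_mop op_id_mop fg_def fw_def id_def)

primrec actg :: "(fop \<times> nat) list \<Rightarrow> nat set \<Rightarrow> nat set" where
  "actg [] y = y"
| "actg (e # r) y = fg (fst e) (snd e) (actg r y)"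

primrec actw :: "(fop \<times> nat) list \<Rightarrow> nat set \<Rightarrow> complex" where
  "actw [] y = 1"
| "actw (e # r) y = fw (fst e) (snd e) (actg r y) * actw r y"

lemma act_Cons_fun: "actg (e # r) = (\<lambda>y. fg (fst e) (snd e) (actg r y))"
   "actw (e # r) = (\<lambda>y. fw (fst e) (snd e) (actg r y) * actw r y)"
  by (rule ext, simp)+

lemma actg_closed: "(\<forall>e\<in>set fl. snd e \<in> modes L) \<Longrightarrow> y \<subseteq> modes L \<Longrightarrow> actg fl y \<subseteq> modes L"
  by (induction fl) (auto simp: fg_def split: fop.splits)

lemma op_prod_mop: "(\<forall>e\<in>set fl. snd e \<in> modes L) \<Longrightarrow>
  op_prod L (map (\<lambda>e. mop L (fg (fst e) (snd e)) (fw (fst e) (snd e))) fl) = mop L (actg fl) (actw fl)"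
proof (induction fl)
  case Nil thus ?case by (simp add: op_prod_def op_id_mop id_def)
next
  case (Cons e r)
  have "op_prod L (map (\<lambda>e. mop L (fg (fst e) (snd e)) (fw (fst e) (snd e))) (e # r))
     = op_mult L (mop L (fg (fst e) (snd e)) (fw (fst e) (snd e))) (mop L (actg r) (actw r))"
    using Cons by (simp add: op_prod_def)
  also have "\<dots> = mop L (actg (e # r)) (actw (e # r))"
    using Cons by (subst mop_mult) (auto intro: actg_closed[THEN subsetD] simp: o_def act_Cons_fun)
  finally show ?case .
qed

definition blist :: "nat \<Rightarrow> nat \<Rightarrow> nat \<Rightarrow> (nat \<Rightarrow> spin \<Rightarrow> fop) \<Rightarrow> (fop \<times> nat) list" where
  "blist L l i \<epsilon> = map (\<lambda>t. (\<epsilon> t Up, mode L (i+t) Up)) [0..<l] @ map (\<lambda>t. (\<epsilon> t Dn, mode L (i+t) Dn)) [0..<l]"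

lemma basis_mop: "0 < L \<Longrightarrow> basis_elem L l i \<epsilon> = mop L (actg (blist L l i \<epsilon>)) (actw (blist L l i \<epsilon>))"
proof -
  assume L: "0 < L"
  have "basis_elem L l i \<epsilon> = op_prod L (map (\<lambda>e. mop L (fg (fst e) (snd e)) (fw (fst e) (snd e))) (blist L l i \<epsilon>))"
    unfolding basis_elem_def blist_def using L by (simp add: fop_op_mop o_def)
  also have "\<dots> = mop L (actg (blist L l i \<epsilon>)) (actw (blist L l i \<epsilon>))"
    using L by (intro op_prod_mop) (auto simp: blist_def mode_in)
  finally show ?thesis .
qed


lemma actg_out: "m \<notin> snd ` set fl \<Longrightarrow> (m \<in> actg fl y \<longleftrightarrow> m \<in> y)"
  by (induction fl) (auto simp: fg_def split: fop.splits)

lemma act_fc: "distinct (map snd fl) \<Longrightarrow> actw fl v \<noteq> 0 \<Longrightarrow> e \<in> set fl \<Longrightarrow>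
   (fst e = FC \<longrightarrow> snd e \<in> v \<and> snd e \<notin> actg fl v) \<and>
   (fst e = FCd \<longrightarrow> snd e \<notin> v \<and> snd e \<in> actg fl v) \<and>
   (fst e \<in> {FZ, FI} \<longrightarrow> (snd e \<in> v \<longleftrightarrow> snd e \<in> actg fl v))"
proof (induction fl)
  case Nil thus ?case by simp
next
  case (Cons a r)
  have d: "snd a \<notin> snd ` set r" "distinct (map snd r)" using Cons.prems(1) by auto
  have nz: "fw (fst a) (snd a) (actg r v) \<noteq> 0" "actw r v \<noteq> 0" using Cons.prems(2) by auto
  show ?case
  proof (cases "e = a")
    case True
    have o: "snd a \<in> actg r v \<longleftrightarrow> snd a \<in> v" using actg_out[OF d(1)] .
    show ?thesis using True nz(1) o by (cases "fst a") (auto simp: fg_def fw_def)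
  next
    case False
    then have e: "e \<in> set r" using Cons.prems(3) by simp
    have ne: "snd e \<noteq> snd a" using d(1) e by (metis image_eqI)
    have IH: "(fst e = FC \<longrightarrow> snd e \<in> v \<and> snd e \<notin> actg r v) \<and>
   (fst e = FCd \<longrightarrow> snd e \<notin> v \<and> snd e \<in> actg r v) \<and>
   (fst e \<in> {FZ, FI} \<longrightarrow> (snd e \<in> v \<longleftrightarrow> snd e \<in> actg r v))" using Cons.IH d(2) nz(2) e by blast
    have "snd e \<in> actg (a # r) v \<longleftrightarrow> snd e \<in> actg r v" using ne by (simp add: fg_def split: fop.splits)
    then show ?thesis using IH by blast
  qed
qed

definition zprod :: "(fop \<times> nat) list \<Rightarrow> nat set \<Rightarrow> complex" where
  "zprod fl v = prod_list (map (\<lambda>e. if fst e = FZ then (if snd e \<in> v then 1 else -1) else 1) fl)"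

lemma zprod_simps[simp]: "zprod [] v = 1"
  "zprod (e # r) v = (if fst e = FZ then (if snd e \<in> v then 1 else -1) else 1) * zprod r v"
  by (simp_all add: zprod_def)

definition nd :: "fop \<Rightarrow> bool" where "nd f \<longleftrightarrow> f = FC \<or> f = FCd"

lemma act_filter: "distinct (map snd fl) \<Longrightarrow>
   actg fl v = actg (filter (\<lambda>e. nd (fst e)) fl) v \<and> actw fl v = actw (filter (\<lambda>e. nd (fst e)) fl) v * zprod fl v"
proof (induction fl)
  case Nil thus ?case by simp
next
  case (Cons a r)
  have d: "snd a \<notin> snd ` set r" "distinct (map snd r)" using Cons.prems(1) by auto
  have IH: "actg r v = actg (filter (\<lambda>e. nd (fst e)) r) v \<and> actw r v = actw (filter (\<lambda>e. nd (fst e)) r) v * zprod r v"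
    using Cons.IH d(2) by blast
  have o: "snd a \<in> actg r v \<longleftrightarrow> snd a \<in> v" using actg_out[OF d(1)] .
  show ?case
  proof (cases "nd (fst a)")
    case True
    then have "fst a \<noteq> FZ" by (auto simp: nd_def)
    thus ?thesis using IH True by simp
  next
    case False
    then have "fst a = FZ \<or> fst a = FI" by (cases "fst a") (auto simp: nd_def)
    thus ?thesis
    proof
      assume f: "fst a = FZ"
      show ?thesis using IH o False f by simp
    next
      assume f: "fst a = FI"
      show ?thesis using IH False f by simp
    qed
  qed
qed

lemma zprod_cong: "(\<And>e. e \<in> set fl \<Longrightarrow> fst e = FZ \<Longrightarrow> (snd e \<in> v \<longleftrightarrow> snd e \<in> v')) \<Longrightarrow> zprod fl v = zprod fl v'"
  by (induction fl) auto

definition flip :: "nat \<Rightarrow> nat set \<Rightarrow> nat set" where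
  "flip m v = (if m \<in> v then v - {m} else insert m v)"

lemma zprod_flip: "distinct (map snd fl) \<Longrightarrow> (FZ, m) \<in> set fl \<Longrightarrow> zprod fl (flip m v) = - zprod fl v"
proof (induction fl)
  case Nil thus ?case by simp
next
  case (Cons a r)
  have d: "snd a \<notin> snd ` set r" "distinct (map snd r)" using Cons.prems(1) by auto
  show ?case
  proof (cases "snd a = m")
    case True
    then have "(FZ, m) \<notin> set r" using d(1) by (metis image_eqI snd_conv)
    then have a: "a = (FZ, m)" using Cons.prems(2) by auto
    have "zprod r (flip m v) = zprod r v"
      by (rule zprod_cong) (use d(1) a in \<open>auto simp: flip_def\<close>)
    then show ?thesis using a by (simp add: flip_def)
  next
    case False
    then have "(FZ, m) \<in> set r" using Cons.prems(2) by auto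
    then have "zprod r (flip m v) = - zprod r v" using Cons.IH d(2) by blast
    moreover have "(snd a \<in> flip m v) = (snd a \<in> v)" using False by (auto simp: flip_def)
    ultimately show ?thesis by simp
  qed
qed

lemma zprod_noFZ: "(\<And>e. e \<in> set fl \<Longrightarrow> fst e \<noteq> FZ) \<Longrightarrow> zprod fl v = 1"
  by (induction fl) auto

lemma flip_flip: "flip m (flip m v) = v"
  by (auto simp: flip_def)

lemma sum_flip_zero:
  fixes g :: "nat set \<Rightarrow> complex"
  assumes "m \<in> M" "finite M" "\<And>v. v \<subseteq> M \<Longrightarrow> g (flip m v) = - g v"
  shows "(\<Sum>v\<in>Pow M. g v) = 0"
proof -
  have "(\<Sum>v\<in>Pow M. g v) = (\<Sum>v\<in>Pow M. g (flip m v))"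
    apply (rule sum.reindex_bij_witness[of _ "flip m" "flip m"])
    apply (simp_all add: flip_flip)
    using assms(1) by (auto simp: flip_def)
  also have "\<dots> = - (\<Sum>v\<in>Pow M. g v)" using assms(3) by (simp add: sum_negf)
  finally show ?thesis by simp
qed


lemma mode_eq: "mode L a s = mode L a' s' \<longleftrightarrow> a mod L = a' mod L \<and> s = s'"
proof
  assume e: "mode L a s = mode L a' s'"
  have "mode L a s div 2 = a mod L" "mode L a' s' div 2 = a' mod L"
       "mode L a s mod 2 = (if s = Up then 0 else 1)" "mode L a' s' mod 2 = (if s' = Up then 0 else 1)"
    by (simp_all add: mode_def)
  then show "a mod L = a' mod L \<and> s = s'" using e by (cases s; cases s') auto
qed (simp add: mode_def)

lemma modeq_dvd: "(a mod L = b mod L) \<longleftrightarrow> int L dvd int a - int b"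
  by (metis mod_eq_dvd_iff of_nat_eq_iff of_nat_mod)

lemma dvd_small: "int L dvd v \<Longrightarrow> - int L < v \<Longrightarrow> v < int L \<Longrightarrow> v = 0"
proof (rule ccontr)
  assume a: "int L dvd v" "- int L < v" "v < int L" "v \<noteq> 0"
  show False
  proof (cases "v > 0")
    case True thus False using a zdvd_imp_le[of "int L" v] by linarith
  next
    case False
    then have "0 < - v" using a by linarith
    moreover have "int L dvd - v" using a by simp
    ultimately show False using a zdvd_imp_le[of "int L" "-v"] by linarith
  qed
qed

lemma sep:
  fixes j t1 t2 L n r l :: nat
  assumes "(j+t1) mod L = n mod L" "(j+t2) mod L = (n+r) mod L" "t1 < l" "t2 < l" "l \<le> r" "r + l \<le> L"
  shows False
proof -
  have "int L dvd int (j+t1) - int n" "int L dvd int (j+t2) - int (n+r)" using assms(1,2) modeq_dvd by blast+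
  then have "int L dvd (int (j+t2) - int (n+r)) - (int (j+t1) - int n)" by (rule dvd_diff[rotated])
  then have d: "int L dvd int t2 - int t1 - int r" by (simp add: algebra_simps)
  have "int t2 - int t1 - int r = 0" by (rule dvd_small[OF d]) (use assms in auto)
  then show False using assms by linarith
qed

lemma C2:
  fixes j t1 t2 L n k :: nat
  assumes "(j+t1) mod L = n mod L" "(j+t2) mod L = (n+(k-1)) mod L" "t1 < k" "t2 < k" "2*k \<le> L" "1 \<le> k"
  shows "t1 = 0 \<and> t2 = k - 1"
proof -
  have "int L dvd int (j+t1) - int n" "int L dvd int (j+t2) - int (n+(k-1))" using assms(1,2) modeq_dvd by blast+
  then have "int L dvd (int (j+t2) - int (n+(k-1))) - (int (j+t1) - int n)" by (rule dvd_diff[rotated])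
  then have d: "int L dvd int t2 - int t1 - int (k-1)" by (simp add: algebra_simps)
  have "int t2 - int t1 - int (k-1) = 0" by (rule dvd_small[OF d]) (use assms in auto)
  then show ?thesis using assms by linarith
qed

lemma win_inj: "((j::nat)+t) mod L = (j+t') mod L \<Longrightarrow> t < L \<Longrightarrow> t' < L \<Longrightarrow> t = t'"
proof -
  assume a: "(j+t) mod L = (j+t') mod L" "t < L" "t' < L"
  have "int L dvd int (j+t) - int (j+t')" using a(1) modeq_dvd by blast
  then have d: "int L dvd int t - int t'" by simp
  have "int t - int t' = 0" by (rule dvd_small[OF d]) (use a in auto)
  then show ?thesis by simp
qed

definition W :: "nat \<Rightarrow> nat \<Rightarrow> nat \<Rightarrow> nat set" where
  "W L j l = {m. \<exists>t<l. \<exists>s. m = mode L (j+t) s}"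

lemma snd_blist: "snd ` set (blist L l j \<epsilon>) = W L j l"
proof -
  have "snd ` set (blist L l j \<epsilon>) = (\<lambda>t. mode L (j+t) Up) ` {0..<l} \<union> (\<lambda>t. mode L (j+t) Dn) ` {0..<l}"
    unfolding blist_def set_append set_map image_Un image_image by simp
  also have "\<dots> = W L j l" unfolding W_def
  proof (intro equalityI subsetI)
    fix m assume "m \<in> (\<lambda>t. mode L (j+t) Up) ` {0..<l} \<union> (\<lambda>t. mode L (j+t) Dn) ` {0..<l}"
    thus "m \<in> {m. \<exists>t<l. \<exists>s. m = mode L (j+t) s}" by auto
  next
    fix m assume "m \<in> {m. \<exists>t<l. \<exists>s. m = mode L (j+t) s}"
    then obtain t s where "t<l" "m = mode L (j+t) s" by auto
    thus "m \<in> (\<lambda>t. mode L (j+t) Up) ` {0..<l} \<union> (\<lambda>t. mode L (j+t) Dn) ` {0..<l}" by (cases s) auto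
  qed
  finally show ?thesis .
qed

lemma distinct_blist: "l \<le> L \<Longrightarrow> distinct (map snd (blist L l j \<epsilon>))"
proof -
  assume L: "l \<le> L"
  have i: "inj_on (\<lambda>t. mode L (j+t) s) {0..<l}" for s
  proof (rule inj_onI)
    fix x y assume "x \<in> {0..<l}" "y \<in> {0..<l}" "mode L (j + x) s = mode L (j + y) s"
    then show "x = y" using L win_inj[of j x L y] by (simp add: mode_eq)
  qed
  have m: "map snd (blist L l j \<epsilon>) = map (\<lambda>t. mode L (j+t) Up) [0..<l] @ map (\<lambda>t. mode L (j+t) Dn) [0..<l]"
    by (simp add: blist_def)
  have disj: "set (map (\<lambda>t. mode L (j+t) Up) [0..<l]) \<inter> set (map (\<lambda>t. mode L (j+t) Dn) [0..<l]) = {}"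
    by (auto simp: mode_eq)
  show ?thesis unfolding m distinct_append using i[of Up] i[of Dn] disj by (simp add: distinct_map)
qed

lemma blist_mem: "t < l \<Longrightarrow> (\<epsilon> t s, mode L (j+t) s) \<in> set (blist L l j \<epsilon>)"
  by (cases s) (auto simp: blist_def)


definition T :: "nat \<Rightarrow> nat \<Rightarrow> nat set \<Rightarrow> complex" where
  "T p q v = fw FC q v * fw FCd p (v - {q})"

lemma jw_sq2: "jw_sign S m * (jw_sign S m * x) = x"
  by (metis jw_sq mult.assoc mult_1_left)

lemma T_base: "q \<notin> \<rho> \<Longrightarrow> p \<notin> \<rho> \<Longrightarrow> p \<noteq> q \<Longrightarrow> T p q (insert q \<rho>) = jw_sign \<rho> q * jw_sign \<rho> p"
proof -
  assume a: "q \<notin> \<rho>" "p \<notin> \<rho>" "p \<noteq> q"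
  have "insert q \<rho> - {q} = \<rho>" using a by auto
  then show ?thesis using a by (simp add: T_def fw_def jw_insert_self)
qed

lemma T1: "\<alpha> \<notin> \<rho> \<Longrightarrow> \<beta> \<notin> \<rho> \<Longrightarrow> \<gamma> \<notin> \<rho> \<Longrightarrow> \<alpha> \<noteq> \<beta> \<Longrightarrow> \<alpha> \<noteq> \<gamma> \<Longrightarrow> \<beta> \<noteq> \<gamma> \<Longrightarrow>
   T \<alpha> \<gamma> (insert \<gamma> \<rho>) * T \<gamma> \<beta> (insert \<beta> \<rho>) = T \<alpha> \<beta> (insert \<beta> \<rho>)"
  by (simp add: T_base mult_ac jw_sq2 jw_sq)

lemma Tsq: "\<alpha> \<notin> \<rho> \<Longrightarrow> \<beta> \<notin> \<rho> \<Longrightarrow> \<alpha> \<noteq> \<beta> \<Longrightarrow> T \<alpha> \<beta> (insert \<beta> \<rho>) * T \<alpha> \<beta> (insert \<beta> \<rho>) = 1"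
  by (simp add: T_base mult_ac jw_sq2 jw_sq)

lemma T2: "\<alpha> \<notin> \<rho> \<Longrightarrow> \<beta> \<notin> \<rho> \<Longrightarrow> \<gamma> \<notin> \<rho> \<Longrightarrow> \<alpha> \<noteq> \<beta> \<Longrightarrow> \<alpha> \<noteq> \<gamma> \<Longrightarrow> \<beta> \<noteq> \<gamma> \<Longrightarrow>
   T \<gamma> \<beta> (insert \<alpha> (insert \<beta> \<rho>)) * T \<alpha> \<gamma> (insert \<gamma> (insert \<beta> \<rho>)) = - T \<alpha> \<beta> (insert \<gamma> (insert \<beta> \<rho>))"
proof -
  assume a: "\<alpha> \<notin> \<rho>" "\<beta> \<notin> \<rho>" "\<gamma> \<notin> \<rho>" "\<alpha> \<noteq> \<beta>" "\<alpha> \<noteq> \<gamma>" "\<beta> \<noteq> \<gamma>"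
  have s1: "insert \<alpha> (insert \<beta> \<rho>) - {\<beta>} = insert \<alpha> \<rho>" using a by auto
  have s2: "insert \<gamma> (insert \<beta> \<rho>) - {\<gamma>} = insert \<beta> \<rho>" using a by auto
  have s3: "insert \<gamma> (insert \<beta> \<rho>) - {\<beta>} = insert \<gamma> \<rho>" using a by auto
  have e1: "T \<gamma> \<beta> (insert \<alpha> (insert \<beta> \<rho>)) = (if \<alpha> < \<beta> then -1 else 1) * jw_sign \<rho> \<beta> * ((if \<alpha> < \<gamma> then -1 else 1) * jw_sign \<rho> \<gamma>)"
    using a by (simp add: T_def fw_def s1 jw_insert jw_insert_self)
  have e2: "T \<alpha> \<gamma> (insert \<gamma> (insert \<beta> \<rho>)) = (if \<beta> < \<gamma> then -1 else 1) * jw_sign \<rho> \<gamma> * ((if \<beta> < \<alpha> then -1 else 1) * jw_sign \<rho> \<alpha>)"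
    using a by (simp add: T_def fw_def s2 jw_insert jw_insert_self)
  have e3: "T \<alpha> \<beta> (insert \<gamma> (insert \<beta> \<rho>)) = (if \<gamma> < \<beta> then -1 else 1) * jw_sign \<rho> \<beta> * ((if \<gamma> < \<alpha> then -1 else 1) * jw_sign \<rho> \<alpha>)"
    using a by (simp add: T_def fw_def s3 jw_insert jw_insert_self)
  show ?thesis unfolding e1 e2 e3 using a
    by (cases "\<alpha> < \<beta>"; cases "\<alpha> < \<gamma>"; cases "\<beta> < \<gamma>"; simp add: mult_ac jw_sq2 jw_sq)
qed

lemma T_nz: "T p q v \<noteq> 0 \<Longrightarrow> q \<in> v \<and> p \<notin> v - {q}"
  by (auto simp: T_def fw_def split: if_splits)

lemma T_fun: "T p q = (\<lambda>v. fw FC q v * fw FCd p (v - {q}))"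
  by (rule ext) (simp add: T_def)

definition Hop :: "nat \<Rightarrow> nat \<Rightarrow> nat \<Rightarrow> op" where
  "Hop L p q = mop L (\<lambda>y. insert p (y - {q})) (T p q)"

lemma hop_mop: "0 < L \<Longrightarrow> op_mult L (ccre L j s) (cann L j' s) = Hop L (mode L j s) (mode L j' s)"
  unfolding Hop_def
  by (simp add: ccre_mop cann_mop, subst mop_mult) (auto simp: fg_def o_def T_fun mult.commute)

definition isdiag :: "op \<Rightarrow> bool" where "isdiag X \<longleftrightarrow> (\<forall>u v. u \<noteq> v \<longrightarrow> X u v = 0)"

lemma diag_mop: "isdiag (mop L id w)" by (simp add: isdiag_def mop_def)

lemma Ufactor_diag: "0 < L \<Longrightarrow> isdiag (op_mult L (op_add (num L j Up) (op_smult c (op_id L)))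
                                 (op_add (num L j Dn) (op_smult c (op_id L))))"
  by (simp add: num_mop op_id_mop mop_smult mop_add, subst mop_mult) (auto simp: diag_mop)

lemma H_off: "0 < L \<Longrightarrow> u \<noteq> v \<Longrightarrow> hubbard L U u v =
   -2 * (\<Sum>js\<in>{1..L} \<times> UNIV. Hop L (mode L (fst js) (snd js)) (mode L (fst js + 1) (snd js)) u v
                         + Hop L (mode L (fst js + 1) (snd js)) (mode L (fst js) (snd js)) u v)"
proof -
  assume L: "0 < L" and uv: "u \<noteq> v"
  have d: "(\<Sum>j\<in>{1..L}. op_mult L (op_add (num L j Up) (op_smult (-1/2) (op_id L)))
                                 (op_add (num L j Dn) (op_smult (-1/2) (op_id L))) u v) = 0"
    using Ufactor_diag[OF L] uv by (simp add: isdiag_def)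
  have "hubbard L U u v = -2 * op_sum (\<lambda>(j, s). op_add (op_mult L (ccre L j s) (cann L (j+1) s))
                                              (op_mult L (ccre L (j+1) s) (cann L j s))) ({1..L} \<times> UNIV) u v
     + 4 * complex_of_real U * op_sum (\<lambda>j. op_mult L (op_add (num L j Up) (op_smult (-1/2) (op_id L)))
                                 (op_add (num L j Dn) (op_smult (-1/2) (op_id L)))) {1..L} u v"
    by (simp add: hubbard_def op_add_def op_smult_def)
  also have "op_sum (\<lambda>j. op_mult L (op_add (num L j Up) (op_smult (-1/2) (op_id L)))
                                 (op_add (num L j Dn) (op_smult (-1/2) (op_id L)))) {1..L} u v = 0"
    using d by (simp add: op_sum_def)
  finally show ?thesis using L by (simp add: op_sum_def case_prod_beta hop_mop op_add_def)
qed


lemma UNIV_spin: "(UNIV :: spin set) = {Up, Dn}"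
  by (auto, metis spin.exhaust)

lemma finite_spin[simp]: "finite (UNIV :: spin set)"
  by (simp add: UNIV_spin)

lemma sum_single: "finite A \<Longrightarrow> a \<in> A \<Longrightarrow> (\<And>x. x \<in> A \<Longrightarrow> x \<noteq> a \<Longrightarrow> g x = 0) \<Longrightarrow> sum g A = g a"
proof -
  assume a: "finite A" "a \<in> A" "\<And>x. x \<in> A \<Longrightarrow> x \<noteq> a \<Longrightarrow> g x = 0"
  have "sum g A = sum g {a}" by (rule sum.mono_neutral_right) (use a in auto)
  then show ?thesis by simp
qed

lemma pair_modes: assumes L: "3 \<le> L" and e: "{mode L j s, mode L (j+1) s} = {mode L j' s', mode L (j'+1) s'}"
  shows "j mod L = j' mod L \<and> s = s'"
proof -
  from e have "(mode L j s = mode L j' s' \<and> mode L (j+1) s = mode L (j'+1) s') \<or>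
               (mode L j s = mode L (j'+1) s' \<and> mode L (j+1) s = mode L j' s')"
    by (simp add: doubleton_eq_iff)
  then show ?thesis
  proof
    assume "mode L j s = mode L j' s' \<and> mode L (j+1) s = mode L (j'+1) s'"
    thus ?thesis by (simp add: mode_eq)
  next
    assume h: "mode L j s = mode L (j'+1) s' \<and> mode L (j+1) s = mode L j' s'"
    then have "j mod L = (j'+1) mod L" "(j+1) mod L = j' mod L" by (simp_all add: mode_eq)
    then have "int L dvd int j - int (j'+1)" "int L dvd int (j+1) - int j'" using modeq_dvd by blast+
    then have "int L dvd (int (j+1) - int j') - (int j - int (j'+1))" by (rule dvd_diff[rotated])
    then have "int L dvd 2" by simp
    then have "int L \<le> 2" by (rule zdvd_imp_le) simp
    thus ?thesis using L by simp
  qed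
qed

definition hoppair :: "nat \<Rightarrow> nat \<Rightarrow> nat \<Rightarrow> bool" where
  "hoppair L p q \<longleftrightarrow> (\<exists>j s. {p, q} = {mode L j s, mode L (j+1) s})"

lemma Hop_nz: "Hop L p q u v \<noteq> 0 \<Longrightarrow> v \<subseteq> modes L \<and> u = insert p (v - {q}) \<and> q \<in> v \<and> p \<notin> v - {q}"
  unfolding Hop_def mop_def using T_nz by (auto split: if_splits)

lemma H_nz: assumes L: "0 < L" and uv: "u \<noteq> v" and nz: "hubbard L U u v \<noteq> 0"
  shows "\<exists>p q. hoppair L p q \<and> v \<subseteq> modes L \<and> q \<in> v \<and> p \<notin> v \<and> u = insert p (v - {q})"
proof -
  have "(\<Sum>js\<in>{1..L} \<times> UNIV. Hop L (mode L (fst js) (snd js)) (mode L (fst js + 1) (snd js)) u v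
                         + Hop L (mode L (fst js + 1) (snd js)) (mode L (fst js) (snd js)) u v) \<noteq> 0"
    using nz H_off[OF L uv] by auto
  then obtain js where "Hop L (mode L (fst js) (snd js)) (mode L (fst js + 1) (snd js)) u v
                         + Hop L (mode L (fst js + 1) (snd js)) (mode L (fst js) (snd js)) u v \<noteq> 0"
    by (meson sum.not_neutral_contains_not_neutral)
  then obtain p q where pq: "{p,q} = {mode L (fst js) (snd js), mode L (fst js + 1) (snd js)}" "Hop L p q u v \<noteq> 0"
    by (metis add.right_neutral add_0 insert_commute)
  have hp: "hoppair L p q" using pq(1) by (auto simp: hoppair_def)
  from Hop_nz[OF pq(2)] have h: "v \<subseteq> modes L" "u = insert p (v - {q})" "q \<in> v" "p \<notin> v - {q}" by auto
  have "p \<notin> v"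
  proof
    assume "p \<in> v"
    then have "p = q" using h(4) by auto
    then have "u = v" using h(2,3) by auto
    then show False using uv by simp
  qed
  then show ?thesis using hp h by blast
qed

lemma modL_eq: "a \<in> {1..L} \<Longrightarrow> b \<in> {1..L} \<Longrightarrow> a mod L = b mod L \<Longrightarrow> a = (b::nat)"
proof -
  assume a: "a \<in> {1..L}" "b \<in> {1..L}" "a mod L = b mod L"
  have "int L dvd int a - int b" using a(3) modeq_dvd by blast
  moreover have "- int L < int a - int b" "int a - int b < int L" using a(1,2) by auto
  ultimately have "int a - int b = 0" by (rule dvd_small)
  then show ?thesis by simp
qed

lemma H_val: assumes L: "3 \<le> L" and hp: "hoppair L p q" and v: "v \<subseteq> modes L" "q \<in> v" "p \<notin> v"
  shows "hubbard L U (insert p (v - {q})) v = -2 * T p q v"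
proof -
  define u where "u = insert p (v - {q})"
  obtain j s where jp: "{p,q} = {mode L j s, mode L (j+1) s}" using hp by (auto simp: hoppair_def)
  have pq: "p \<noteq> q" using v by auto
  have uv: "u \<noteq> v" using v by (auto simp: u_def)
  define j0 where "j0 = (if j mod L = 0 then L else j mod L)"
  have j0: "j0 \<in> {1..L}" "j0 mod L = j mod L" using L by (auto simp: j0_def)
  have j01: "(j0+1) mod L = (j+1) mod L" using j0(2) by (metis mod_add_left_eq)
  have mj: "mode L j0 s = mode L j s" "mode L (j0+1) s = mode L (j+1) s" using j0 j01 by (simp_all add: mode_eq)
  define f where "f js = Hop L (mode L (fst js) (snd js)) (mode L (fst js + 1) (snd js)) u v
                         + Hop L (mode L (fst js + 1) (snd js)) (mode L (fst js) (snd js)) u v" for js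
  have other: "f js = 0" if js: "js \<in> {1..L} \<times> UNIV" "js \<noteq> (j0, s)" for js
  proof (rule ccontr)
    assume "f js \<noteq> 0"
    then obtain a b where ab: "{a,b} = {mode L (fst js) (snd js), mode L (fst js + 1) (snd js)}" "Hop L a b u v \<noteq> 0"
      unfolding f_def by (metis add.right_neutral add_0 insert_commute)
    from Hop_nz[OF ab(2)] have h: "u = insert a (v - {b})" "b \<in> v" "a \<notin> v - {b}" by auto
    have "p = a" using h v by (auto simp: u_def)
    moreover have "q = b" using h v pq by (auto simp: u_def)
    ultimately have "{mode L j s, mode L (j+1) s} = {mode L (fst js) (snd js), mode L (fst js + 1) (snd js)}"
      using ab jp by simp
    then have "j mod L = fst js mod L" "s = snd js" using pair_modes[OF L] by blast+
    then have "fst js = j0" using modL_eq[of "fst js" L j0] j0 js(1) by auto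
    then show False using js \<open>s = snd js\<close> by (cases js) auto
  qed
  have at: "f (j0, s) = T p q v"
  proof -
    have "f (j0, s) = Hop L (mode L j s) (mode L (j+1) s) u v + Hop L (mode L (j+1) s) (mode L j s) u v"
      unfolding f_def fst_conv snd_conv mj ..
    also have "\<dots> = Hop L p q u v + Hop L q p u v"
      using jp pq by (auto simp: doubleton_eq_iff)
    also have "Hop L p q u v = T p q v" using v by (simp add: Hop_def mop_def u_def)
    also have "Hop L q p u v = 0"
    proof -
      have "insert q (v - {p}) = v" using v by auto
      then show ?thesis using uv by (simp add: Hop_def mop_def)
    qed
    finally show ?thesis by simp
  qed
  have "hubbard L U u v = -2 * (\<Sum>js\<in>{1..L} \<times> UNIV. f js)"
    using H_off[of L u v U] L uv by (simp add: f_def)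
  also have "(\<Sum>js\<in>{1..L} \<times> UNIV. f js) = f (j0, s)"
    by (rule sum_single) (use other j0 in auto)
  finally show ?thesis using at by (simp add: u_def)
qed


lemma modeq_shift: "((a::nat) + c) mod L = (b + c) mod L \<longleftrightarrow> a mod L = b mod L"
  by (simp add: modeq_dvd)

lemma noshift: "0 < r \<Longrightarrow> r < L \<Longrightarrow> ((i::nat) + r) mod L \<noteq> i mod L"
proof
  assume a: "0 < r" "r < L" "(i + r) mod L = i mod L"
  have "int L dvd int (i+r) - int i" using a(3) modeq_dvd by blast
  then have "int L dvd int r" by simp
  then have "int L \<le> int r" using a(1) by (intro zdvd_imp_le) auto
  then show False using a(2) by simp
qed

lemma inW: "mode L n s \<in> W L j l \<Longrightarrow> \<exists>t<l. (j+t) mod L = n mod L"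
  by (auto simp: W_def mode_eq)

lemma classify:
  fixes L k i j l p q :: nat
  assumes k2: "2 \<le> k" and Lk: "2*k+2 \<le> L" and lk: "l \<le> k"
    and hp: "hoppair L p q"
    and Wc: "\<And>m. (m \<in> {mode L i \<sigma>, mode L (i+k) \<mu>}) \<noteq> (m \<in> {p,q}) \<Longrightarrow> m \<in> W L j l"
  shows "{p,q} = {mode L i \<sigma>, mode L (i+1) \<sigma>} \<or> {p,q} = {mode L (i+k) \<mu>, mode L (i+k-1) \<mu>}"
proof -
  define A where "A = mode L i \<sigma>"
  define B where "B = mode L (i+k) \<mu>"
  obtain j' s' where pq: "{p,q} = {mode L j' s', mode L (j'+1) s'}" using hp by (auto simp: hoppair_def)
  define P1 where "P1 = mode L j' s'"
  define P2 where "P2 = mode L (j'+1) s'"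
  have pq': "{p,q} = {P1,P2}" using pq by (simp add: P1_def P2_def)
  have AB: "A \<noteq> B"
    using noshift[of k L i] k2 Lk by (auto simp: A_def B_def mode_eq)
  have k1: "(k+1) mod L \<noteq> 0" using k2 Lk by simp
  have nk1: "(i + (k+1)) mod L \<noteq> i mod L" using noshift[of "k+1" L i] k2 Lk by simp
  have WA: "A \<in> W L j l" if "A \<notin> {P1,P2}" using Wc[of A] that AB pq' by (auto simp: A_def B_def)
  have WB: "B \<in> W L j l" if "B \<notin> {P1,P2}" using Wc[of B] that AB pq' by (auto simp: A_def B_def)
  have WP: "P \<in> W L j l" if "P \<in> {P1,P2}" "P \<notin> {A,B}" for P using Wc[of P] that pq' by (auto simp: A_def B_def)
  have sepk1: False if h1: "mode L n1 s1 \<in> W L j l" and h2: "mode L n2 s2 \<in> W L j l"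
     and h3: "n2 mod L = (n1 + (k+1)) mod L" for n1 n2 s1 s2
  proof -
    obtain t1 where "t1 < l" "(j+t1) mod L = n1 mod L" using inW[OF h1] by blast
    moreover obtain t2 where "t2 < l" "(j+t2) mod L = n2 mod L" using inW[OF h2] by blast
    ultimately show False using sep[of j t1 L n1 t2 "k+1" l] h3 lk Lk by auto
  qed
  have n1: "(j' + 1) mod L \<noteq> j' mod L" using noshift[of 1 L j'] Lk by simp
  consider "A = P1" | "A = P2" | "B = P2" | "B = P1" | "A \<notin> {P1,P2}" "B \<notin> {P1,P2}" by blast
  then show ?thesis
  proof cases
    case 1
    then have "i mod L = j' mod L" "\<sigma> = s'" by (simp_all add: A_def P1_def mode_eq)
    then have "P2 = mode L (i+1) \<sigma>" using modeq_shift[of j' 1 L i] by (simp add: P2_def mode_eq)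
    then show ?thesis using 1 pq' by (simp add: A_def)
  next
    case 2
    then have e: "i mod L = (j'+1) mod L" "\<sigma> = s'" by (simp_all add: A_def P2_def mode_eq)
    have e2: "(i + k) mod L = (j' + (k+1)) mod L" using e(1) modeq_shift[of i k L "j'+1"] by simp
    show ?thesis
    proof (cases "B = P1")
      case True
      then have "(i+k) mod L = j' mod L" by (simp add: B_def P1_def mode_eq)
      then have "(i+k+1) mod L = (j'+1) mod L" using modeq_shift[of "i+k" 1 L j'] by simp
      then have "(i + (k+1)) mod L = i mod L" using e(1) by simp
      then show ?thesis using nk1 by simp
    next
      case False
      then have "B \<notin> {P1,P2}" using 2 AB by auto
      moreover have "P1 \<notin> {A,B}" using False 2 AB e n1 by (auto simp: P1_def P2_def A_def mode_eq)
      ultimately show ?thesis using sepk1[of j' s' "i+k" \<mu>] WB WP[of P1] e2 by (auto simp: P1_def B_def)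
    qed
  next
    case 3
    then have e: "(i+k) mod L = (j'+1) mod L" "\<mu> = s'" by (simp_all add: B_def P2_def mode_eq)
    have "i+k = (i+k-1)+1" using k2 by simp
    then have "(i+k-1) mod L = j' mod L" using e(1) modeq_shift[of "i+k-1" 1 L j'] by simp
    then have "P1 = mode L (i+k-1) \<mu>" by (simp add: P1_def mode_eq e(2))
    then show ?thesis using 3 pq' by (auto simp: B_def)
  next
    case 4
    then have e: "(i+k) mod L = j' mod L" "\<mu> = s'" by (simp_all add: B_def P1_def mode_eq)
    then have e2: "(j'+1) mod L = (i + (k+1)) mod L" using modeq_shift[of "i+k" 1 L j'] by simp
    show ?thesis
    proof (cases "A = P2")
      case True
      then have "i mod L = (j'+1) mod L" by (simp add: A_def P2_def mode_eq)
      then show ?thesis using nk1 e2 by simp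
    next
      case False
      then have "A \<notin> {P1,P2}" using 4 AB by auto
      moreover have "P2 \<notin> {A,B}" using False 4 AB e n1 by (auto simp: P1_def P2_def B_def mode_eq)
      ultimately show ?thesis using sepk1[of i \<sigma> "j'+1" s'] WA WP[of P2] e2 by (auto simp: P2_def A_def)
    qed
  next
    case 5
    then have "A \<in> W L j l" "B \<in> W L j l" using WA WB by auto
    then obtain t1 t2 where "t1 < l" "(j+t1) mod L = i mod L" "t2 < l" "(j+t2) mod L = (i+k) mod L"
      using inW by (metis A_def B_def)
    then show ?thesis using sep[of j t1 L i t2 k l] lk Lk by auto
  qed
qed

lemma basis_nz: "0 < L \<Longrightarrow> basis_elem L l j \<epsilon> u v \<noteq> 0 \<Longrightarrow>
   v \<subseteq> modes L \<and> u = actg (blist L l j \<epsilon>) v \<and> actw (blist L l j \<epsilon>) v \<noteq> 0"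
  by (simp add: basis_mop mop_def split: if_splits)

lemma basis_support: "0 < L \<Longrightarrow> basis_elem L l j \<epsilon> u v \<noteq> 0 \<Longrightarrow> m \<notin> W L j l \<Longrightarrow> (m \<in> u \<longleftrightarrow> m \<in> v)"
  using basis_nz[of L l j \<epsilon> u v] actg_out[of m "blist L l j \<epsilon>" v] by (simp add: snd_blist)

lemma shape:
  fixes L k n l j :: nat
  assumes k2: "2 \<le> k" and Lk: "2*k+2 \<le> L" and l1: "1 \<le> l" and lk: "l \<le> k"
    and nz: "basis_elem L l j \<epsilon> u v \<noteq> 0"
    and a1: "a1 = mode L n \<sigma>" and a2: "a2 = mode L (n+k-1) \<mu>"
    and sd: "{src, dst} = {a1, a2}" "src \<noteq> dst"
    and mem: "src \<in> v" "src \<notin> u" "dst \<in> u" "dst \<notin> v" "\<And>m. m \<notin> {a1,a2} \<Longrightarrow> (m \<in> u \<longleftrightarrow> m \<in> v)"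
  shows "l = k \<and> j mod L = n mod L \<and> \<epsilon> 0 \<sigma> = (if src = a1 then FC else FCd)
     \<and> \<epsilon> (k-1) \<mu> = (if src = a2 then FC else FCd)
     \<and> (\<forall>t<k. \<forall>s. (t,s) \<noteq> (0,\<sigma>) \<longrightarrow> (t,s) \<noteq> (k-1,\<mu>) \<longrightarrow> \<epsilon> t s = FZ \<or> \<epsilon> t s = FI)"
proof -
  have L0: "0 < L" using Lk by simp
  have sd': "(src = a1 \<and> dst = a2) \<or> (src = a2 \<and> dst = a1)" using sd(1) by (simp add: doubleton_eq_iff)
  have diff: "(m \<in> u) \<noteq> (m \<in> v)" if "m \<in> {a1,a2}" for m using that sd' mem(1-4) by auto
  have W1: "a1 \<in> W L j l" using basis_support[OF L0 nz, of a1] diff[of a1] by auto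
  have W2: "a2 \<in> W L j l" using basis_support[OF L0 nz, of a2] diff[of a2] by auto
  obtain t1 where t1: "t1 < l" "(j+t1) mod L = n mod L" using inW W1 a1 by blast
  obtain t2 where t2: "t2 < l" "(j+t2) mod L = (n+(k-1)) mod L" using inW W2 a2 k2
    by (metis Nat.add_diff_assoc le_trans one_le_numeral)
  have lk': "l = k"
  proof (rule ccontr)
    assume "l \<noteq> k"
    then have lk1: "l \<le> k - 1" using lk by simp
    have "k - 1 + l \<le> L" using lk1 Lk by linarith
    from sep[OF t1(2) t2(2) t1(1) t2(1) lk1 this] show False .
  qed
  have tt: "t1 = 0 \<and> t2 = k - 1" using C2[of j t1 L n t2 k] t1 t2 lk' Lk k2 by auto
  then have jn: "j mod L = n mod L" using t1 by simp
  have jn2: "(j + (k-1)) mod L = (n+k-1) mod L" using t2 tt k2 by (simp add: Nat.add_diff_assoc)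
  have d: "distinct (map snd (blist L l j \<epsilon>))" using distinct_blist lk' Lk by simp
  have bn: "u = actg (blist L l j \<epsilon>) v" "actw (blist L l j \<epsilon>) v \<noteq> 0" using basis_nz[OF L0 nz] by auto
  have ent: "(\<epsilon> t s = FC \<longrightarrow> mode L (j+t) s \<in> v \<and> mode L (j+t) s \<notin> u) \<and>
             (\<epsilon> t s = FCd \<longrightarrow> mode L (j+t) s \<notin> v \<and> mode L (j+t) s \<in> u) \<and>
             (\<epsilon> t s \<in> {FZ, FI} \<longrightarrow> (mode L (j+t) s \<in> v \<longleftrightarrow> mode L (j+t) s \<in> u))" if "t < k" for t s
    using act_fc[OF d bn(2) blist_mem[of t l \<epsilon> s L j]] that lk' bn(1) by simp
  have m1: "mode L (j+t) s = a1 \<longleftrightarrow> t = 0 \<and> s = \<sigma>" if "t < k" for t s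
  proof -
    have "(j+t) mod L = n mod L \<longleftrightarrow> t = 0"
      using win_inj[of j t L 0] that Lk jn by auto
    then show ?thesis by (auto simp: a1 mode_eq)
  qed
  have m2: "mode L (j+t) s = a2 \<longleftrightarrow> t = k-1 \<and> s = \<mu>" if "t < k" for t s
  proof -
    have "(j+t) mod L = (n+k-1) mod L \<longleftrightarrow> t = k-1"
      using win_inj[of j t L "k-1"] that Lk jn2 by auto
    then show ?thesis by (auto simp: a2 mode_eq)
  qed
  have k0: "0 < k" "k - 1 < k" using k2 by auto
  have E1: "\<epsilon> 0 \<sigma> = (if src = a1 then FC else FCd)"
  proof -
    have "mode L (j+0) \<sigma> = a1" using m1[OF k0(1)] by simp
    then show ?thesis using ent[OF k0(1), of \<sigma>] sd' sd(2) mem(1-4) by (cases "\<epsilon> 0 \<sigma>") auto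
  qed
  have E2: "\<epsilon> (k-1) \<mu> = (if src = a2 then FC else FCd)"
  proof -
    have "mode L (j+(k-1)) \<mu> = a2" using m2[OF k0(2)] by simp
    then show ?thesis using ent[OF k0(2), of \<mu>] sd' sd(2) mem(1-4) by (cases "\<epsilon> (k-1) \<mu>") auto
  qed
  have E3: "\<epsilon> t s = FZ \<or> \<epsilon> t s = FI" if "t < k" "(t,s) \<noteq> (0,\<sigma>)" "(t,s) \<noteq> (k-1,\<mu>)" for t s
  proof -
    have "mode L (j+t) s \<notin> {a1,a2}" using m1[OF that(1)] m2[OF that(1)] that by auto
    then have "mode L (j+t) s \<in> u \<longleftrightarrow> mode L (j+t) s \<in> v" using mem(5) by blast
    then show ?thesis using ent[OF that(1), of s] by (cases "\<epsilon> t s") auto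
  qed
  show ?thesis using lk' jn E1 E2 E3 by blast
qed


lemma filt: assumes "2 \<le> k" "\<And>t. t < k \<Longrightarrow> P t \<longleftrightarrow> (t = 0 \<and> c1) \<or> (t = k-1 \<and> c2)"
  shows "filter P [0..<k] = (if c1 then [0] else []) @ (if c2 then [k-1] else [])"
proof -
  have u: "[0..<k] = 0 # [1..<k-1] @ [k-1]"
    using assms(1) by (metis One_nat_def Suc_pred le_trans less_eq_Suc_le not_less_eq_eq numeral_2_eq_2 upt_Suc_append upt_conv_Cons zero_less_Suc)
  have m: "filter P [1..<k-1] = []"
    using assms by (auto simp: filter_empty_conv)
  have "0 \<noteq> k - 1" using assms(1) by simp
  then show ?thesis unfolding u using assms m by auto
qed

lemma anticomm: "p \<noteq> q \<Longrightarrow> fw FC q (insert p v) * fw FCd p v = - T p q v"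
proof -
  assume pq: "p \<noteq> q"
  show ?thesis
  proof (cases "q \<in> v \<and> p \<notin> v")
    case False thus ?thesis using pq by (auto simp: T_def fw_def)
  next
    case True
    have vq: "v = insert q (v - {q})" using True by auto
    have "jw_sign v p = (if q < p then -1 else 1) * jw_sign (v - {q}) p"
      by (subst vq, subst jw_insert) auto
    then have j: "jw_sign (v - {q}) p = (if q < p then -1 else 1) * jw_sign v p" by auto
    show ?thesis using True pq
      by (auto simp: T_def fw_def jw_insert j)
  qed
qed

lemma act2_std: "actg [(FCd,p),(FC,q)] v = insert p (v - {q})" "actw [(FCd,p),(FC,q)] v = T p q v"
  by (simp_all add: fg_def T_def mult.commute)

lemma act2_rev: "p \<noteq> q \<Longrightarrow> actg [(FC,q),(FCd,p)] v = insert p (v - {q})"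
   "p \<noteq> q \<Longrightarrow> actw [(FC,q),(FCd,p)] v = - T p q v"
  by (auto simp: fg_def anticomm)

definition wtau :: "spin \<Rightarrow> spin \<Rightarrow> bool \<Rightarrow> complex" where
  "wtau \<sigma> \<mu> bb = (if (\<sigma> = Dn \<and> \<mu> = Up) = bb then -1 else 1)"

lemma wvalue:
  fixes L k n j :: nat
  assumes k2: "2 \<le> k" and Lk: "2*k+2 \<le> L" and jn: "j mod L = n mod L"
    and a1: "a1 = mode L n \<sigma>" and a2: "a2 = mode L (n+k-1) \<mu>"
    and sd: "(src = a1 \<and> dst = a2) \<or> (src = a2 \<and> dst = a1)" and bb: "bb \<longleftrightarrow> dst = a1"
    and E1: "\<epsilon> 0 \<sigma> = (if src = a1 then FC else FCd)" and E2: "\<epsilon> (k-1) \<mu> = (if src = a2 then FC else FCd)"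
    and E3: "\<And>t s. t < k \<Longrightarrow> (t,s) \<noteq> (0,\<sigma>) \<Longrightarrow> (t,s) \<noteq> (k-1,\<mu>) \<Longrightarrow> \<epsilon> t s = FZ \<or> \<epsilon> t s = FI"
  shows "basis_elem L k j \<epsilon> u v = (if v \<subseteq> modes L \<and> u = insert dst (v - {src})
           then wtau \<sigma> \<mu> bb * zprod (blist L k j \<epsilon>) v * T dst src v else 0)"
proof -
  have L0: "0 < L" using Lk by simp
  have a12: "a1 \<noteq> a2"
  proof
    assume "a1 = a2"
    then have "n mod L = (n + (k-1)) mod L" using k2 by (simp add: a1 a2 mode_eq)
    moreover have "k - 1 < L" using Lk by linarith
    ultimately show False using noshift[of "k-1" L n] k2 by simp
  qed
  have sdne: "src \<noteq> dst" using sd a12 by auto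
  have ma1: "mode L (j+0) \<sigma> = a1" using jn by (simp add: a1 mode_eq)
  have ma2: "mode L (j+(k-1)) \<mu> = a2"
    using jn k2 modeq_shift[of j "k-1" L n] by (simp add: a2 mode_eq)
  have ndc: "nd (\<epsilon> t s) \<longleftrightarrow> (t = 0 \<and> s = \<sigma>) \<or> (t = k-1 \<and> s = \<mu>)" if "t < k" for t s
  proof (cases "(t,s) = (0,\<sigma>) \<or> (t,s) = (k-1,\<mu>)")
    case True thus ?thesis using E1 E2 by (auto simp: nd_def split: if_splits)
  next
    case False thus ?thesis using E3[OF that, of s] by (auto simp: nd_def)
  qed
  have fU: "filter (\<lambda>t. nd (\<epsilon> t Up)) [0..<k] = (if \<sigma> = Up then [0] else []) @ (if \<mu> = Up then [k-1] else [])"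
    by (rule filt[OF k2]) (use ndc in auto)
  have fD: "filter (\<lambda>t. nd (\<epsilon> t Dn)) [0..<k] = (if \<sigma> = Dn then [0] else []) @ (if \<mu> = Dn then [k-1] else [])"
    by (rule filt[OF k2]) (use ndc in auto)
  define F2 where "F2 = (if \<sigma> = Dn \<and> \<mu> = Up then [(\<epsilon> (k-1) \<mu>, a2), (\<epsilon> 0 \<sigma>, a1)] else [(\<epsilon> 0 \<sigma>, a1), (\<epsilon> (k-1) \<mu>, a2)])"
  have filtF: "filter (\<lambda>e. nd (fst e)) (blist L k j \<epsilon>) = F2"
  proof -
    have "filter (\<lambda>e. nd (fst e)) (blist L k j \<epsilon>) =
      map (\<lambda>t. (\<epsilon> t Up, mode L (j+t) Up)) (filter (\<lambda>t. nd (\<epsilon> t Up)) [0..<k]) @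
      map (\<lambda>t. (\<epsilon> t Dn, mode L (j+t) Dn)) (filter (\<lambda>t. nd (\<epsilon> t Dn)) [0..<k])"
      by (simp add: blist_def filter_map o_def)
    also have "\<dots> = F2" unfolding fU fD F2_def using ma1 ma2 by (cases \<sigma>; cases \<mu>) auto
    finally show ?thesis .
  qed
  have d: "distinct (map snd (blist L k j \<epsilon>))" using distinct_blist Lk by simp
  have af: "actg (blist L k j \<epsilon>) v = actg F2 v" "actw (blist L k j \<epsilon>) v = actw F2 v * zprod (blist L k j \<epsilon>) v"
    using act_filter[OF d, of v] filtF by auto
  have F2v: "actg F2 v = insert dst (v - {src}) \<and> actw F2 v = wtau \<sigma> \<mu> bb * T dst src v"
  proof (cases "\<sigma> = Dn \<and> \<mu> = Up")
    case True
    then show ?thesis using sd E1 E2 a12 sdne bb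
      by (auto simp: F2_def act2_std act2_rev wtau_def simp del: actg.simps actw.simps)
  next
    case False
    then show ?thesis using sd E1 E2 a12 sdne bb
      by (auto simp: F2_def act2_std act2_rev wtau_def simp del: actg.simps actw.simps)
  qed
  show ?thesis
    unfolding basis_mop[OF L0] mop_def af using F2v by auto
qed


lemma hoppair_sym: "hoppair L p q \<Longrightarrow> hoppair L q p"
  by (auto simp: hoppair_def insert_commute)

lemma term_src:
  fixes L :: nat and U :: real and \<tau> :: complex and \<chi> :: "nat set \<Rightarrow> complex"
  assumes L3: "3 \<le> L" and hp: "hoppair L src e'"
   and dist: "src \<noteq> dst" "src \<noteq> e'" "dst \<noteq> e'" and nin: "src \<notin> \<eta>" "dst \<notin> \<eta>"
   and md: "insert src (insert dst (insert e' \<eta>)) \<subseteq> modes L"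
   and Pw: "\<And>u v. v \<subseteq> modes L \<Longrightarrow> Pw u v = (if u = insert dst (v - {e'}) then \<tau> * \<chi> v * T dst e' v else 0)"
   and chi: "\<And>v. (\<And>m. m \<notin> {src,dst,e'} \<Longrightarrow> (m\<in>v \<longleftrightarrow> m\<in>\<eta>)) \<Longrightarrow> \<chi> v = \<chi> \<eta>"
  shows "T dst src (insert src \<eta>) *
     ((if (src \<in> insert src \<eta>) \<noteq> (e' \<in> insert src \<eta>)
       then Pw (insert dst \<eta>) (flip src (flip e' (insert src \<eta>))) * hubbard L U (flip src (flip e' (insert src \<eta>))) (insert src \<eta>) else 0)
    - (if (src \<in> insert dst \<eta>) \<noteq> (e' \<in> insert dst \<eta>)
       then hubbard L U (insert dst \<eta>) (flip src (flip e' (insert dst \<eta>))) * Pw (flip src (flip e' (insert dst \<eta>))) (insert src \<eta>) else 0))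
   = -2 * \<tau> * \<chi> \<eta>"
proof (cases "e' \<in> \<eta>")
  case False
  define s where "s = T dst src (insert src \<eta>)"
  have z1: "flip src (flip e' (insert src \<eta>)) = insert e' \<eta>" using False nin dist by (auto simp: flip_def)
  have c2: "\<not> ((src \<in> insert dst \<eta>) \<noteq> (e' \<in> insert dst \<eta>))" using False nin dist by auto
  have c1: "(src \<in> insert src \<eta>) \<noteq> (e' \<in> insert src \<eta>)" using False dist by auto
  have H: "hubbard L U (insert e' \<eta>) (insert src \<eta>) = -2 * T e' src (insert src \<eta>)"
  proof -
    have "insert e' (insert src \<eta> - {src}) = insert e' \<eta>" using nin by auto
    then show ?thesis using H_val[OF L3 hoppair_sym[OF hp], of "insert src \<eta>" U] md False dist by auto
  qed
  have P: "Pw (insert dst \<eta>) (insert e' \<eta>) = \<tau> * \<chi> \<eta> * T dst e' (insert e' \<eta>)"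
  proof -
    have "insert dst \<eta> = insert dst (insert e' \<eta> - {e'})" using False by auto
    moreover have "\<chi> (insert e' \<eta>) = \<chi> \<eta>" by (rule chi) auto
    ultimately show ?thesis using Pw[of "insert e' \<eta>" "insert dst \<eta>"] md by auto
  qed
  have t1: "T dst e' (insert e' \<eta>) * T e' src (insert src \<eta>) = s"
    unfolding s_def by (rule T1) (use False nin dist in auto)
  have sq: "s * s = 1" unfolding s_def by (rule Tsq) (use nin dist in auto)
  have "s * (\<tau> * \<chi> \<eta> * T dst e' (insert e' \<eta>) * (-2 * T e' src (insert src \<eta>))) = -2 * \<tau> * \<chi> \<eta> * (s * (T dst e' (insert e' \<eta>) * T e' src (insert src \<eta>)))"
    by (simp add: algebra_simps)
  also have "\<dots> = -2 * \<tau> * \<chi> \<eta>" unfolding t1 sq by simp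
  finally show ?thesis using c1 c2 unfolding z1 H P s_def[symmetric] by simp
next
  case True
  define \<rho> where "\<rho> = \<eta> - {e'}"
  have eta: "\<eta> = insert e' \<rho>" "e' \<notin> \<rho>" "src \<notin> \<rho>" "dst \<notin> \<rho>" using True nin by (auto simp: \<rho>_def)
  define s where "s = T dst src (insert src \<eta>)"
  have c1: "\<not> ((src \<in> insert src \<eta>) \<noteq> (e' \<in> insert src \<eta>))" using True by auto
  have c2: "(src \<in> insert dst \<eta>) \<noteq> (e' \<in> insert dst \<eta>)" using True nin dist by auto
  have z2: "flip src (flip e' (insert dst \<eta>)) = insert src (insert dst \<rho>)" using eta dist by (auto simp: flip_def)
  have H: "hubbard L U (insert dst \<eta>) (insert src (insert dst \<rho>)) = -2 * T e' src (insert src (insert dst \<rho>))"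
  proof -
    have "insert e' (insert src (insert dst \<rho>) - {src}) = insert dst \<eta>" using eta dist by auto
    then show ?thesis using H_val[OF L3 hoppair_sym[OF hp], of "insert src (insert dst \<rho>)" U] md eta dist by auto
  qed
  have P: "Pw (insert src (insert dst \<rho>)) (insert src \<eta>) = \<tau> * \<chi> \<eta> * T dst e' (insert src \<eta>)"
  proof -
    have "insert src (insert dst \<rho>) = insert dst (insert src \<eta> - {e'})" using eta dist by auto
    moreover have "\<chi> (insert src \<eta>) = \<chi> \<eta>" by (rule chi) auto
    ultimately show ?thesis using Pw[of "insert src \<eta>" "insert src (insert dst \<rho>)"] md by auto
  qed
  have t2: "T e' src (insert src (insert dst \<rho>)) * T dst e' (insert src \<eta>) = - s"
  proof -
    have "T e' src (insert dst (insert src \<rho>)) * T dst e' (insert e' (insert src \<rho>)) = - T dst src (insert e' (insert src \<rho>))"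
      by (rule T2) (use eta dist in auto)
    moreover have "insert src (insert dst \<rho>) = insert dst (insert src \<rho>)" "insert src \<eta> = insert e' (insert src \<rho>)"
      using eta by auto
    ultimately show ?thesis by (simp add: s_def)
  qed
  have sq: "s * s = 1" unfolding s_def by (rule Tsq) (use nin dist in auto)
  have "s * (0 - (-2 * T e' src (insert src (insert dst \<rho>))) * (\<tau> * \<chi> \<eta> * T dst e' (insert src \<eta>)))
      = 2 * \<tau> * \<chi> \<eta> * (s * (T e' src (insert src (insert dst \<rho>)) * T dst e' (insert src \<eta>)))"
    by (simp add: algebra_simps)
  also have "\<dots> = -2 * \<tau> * \<chi> \<eta>" unfolding t2 using sq by simp
  finally show ?thesis using c1 c2 unfolding z2 H P s_def[symmetric] by simp
qed


lemma term_dst: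
  fixes L :: nat and U :: real and \<tau> :: complex and \<chi> :: "nat set \<Rightarrow> complex"
  assumes L3: "3 \<le> L" and hp: "hoppair L dst e'"
   and dist: "src \<noteq> dst" "src \<noteq> e'" "dst \<noteq> e'" and nin: "src \<notin> \<eta>" "dst \<notin> \<eta>"
   and md: "insert src (insert dst (insert e' \<eta>)) \<subseteq> modes L"
   and Pw: "\<And>u v. v \<subseteq> modes L \<Longrightarrow> Pw u v = (if u = insert e' (v - {src}) then \<tau> * \<chi> v * T e' src v else 0)"
   and chi: "\<And>v. (\<And>m. m \<notin> {src,dst,e'} \<Longrightarrow> (m\<in>v \<longleftrightarrow> m\<in>\<eta>)) \<Longrightarrow> \<chi> v = \<chi> \<eta>"
  shows "T dst src (insert src \<eta>) *
     ((if (dst \<in> insert src \<eta>) \<noteq> (e' \<in> insert src \<eta>)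
       then Pw (insert dst \<eta>) (flip dst (flip e' (insert src \<eta>))) * hubbard L U (flip dst (flip e' (insert src \<eta>))) (insert src \<eta>) else 0)
    - (if (dst \<in> insert dst \<eta>) \<noteq> (e' \<in> insert dst \<eta>)
       then hubbard L U (insert dst \<eta>) (flip dst (flip e' (insert dst \<eta>))) * Pw (flip dst (flip e' (insert dst \<eta>))) (insert src \<eta>) else 0))
   = 2 * \<tau> * \<chi> \<eta>"
proof (cases "e' \<in> \<eta>")
  case True
  define \<rho> where "\<rho> = \<eta> - {e'}"
  have eta: "\<eta> = insert e' \<rho>" "e' \<notin> \<rho>" "src \<notin> \<rho>" "dst \<notin> \<rho>" using True nin by (auto simp: \<rho>_def)
  define s where "s = T dst src (insert src \<eta>)"
  have c1: "(dst \<in> insert src \<eta>) \<noteq> (e' \<in> insert src \<eta>)" using True nin dist by auto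
  have c2: "\<not> ((dst \<in> insert dst \<eta>) \<noteq> (e' \<in> insert dst \<eta>))" using True by auto
  have z1: "flip dst (flip e' (insert src \<eta>)) = insert dst (insert src \<rho>)" using eta dist by (auto simp: flip_def)
  have H: "hubbard L U (insert dst (insert src \<rho>)) (insert src \<eta>) = -2 * T dst e' (insert src \<eta>)"
  proof -
    have "insert dst (insert src \<eta> - {e'}) = insert dst (insert src \<rho>)" using eta dist by auto
    then show ?thesis using H_val[OF L3 hp, of "insert src \<eta>" U] md eta dist by auto
  qed
  have P: "Pw (insert dst \<eta>) (insert dst (insert src \<rho>)) = \<tau> * \<chi> \<eta> * T e' src (insert dst (insert src \<rho>))"
  proof -
    have "insert dst \<eta> = insert e' (insert dst (insert src \<rho>) - {src})" using eta dist by auto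
    moreover have "\<chi> (insert dst (insert src \<rho>)) = \<chi> \<eta>" by (rule chi) (use eta in auto)
    moreover have "insert dst (insert src \<rho>) \<subseteq> modes L" using md eta by auto
    ultimately show ?thesis using Pw[of "insert dst (insert src \<rho>)" "insert dst \<eta>"] by auto
  qed
  have t2: "T e' src (insert dst (insert src \<rho>)) * T dst e' (insert src \<eta>) = - s"
  proof -
    have "T e' src (insert dst (insert src \<rho>)) * T dst e' (insert e' (insert src \<rho>)) = - T dst src (insert e' (insert src \<rho>))"
      by (rule T2) (use eta dist in auto)
    moreover have "insert src \<eta> = insert e' (insert src \<rho>)" using eta by auto
    ultimately show ?thesis by (simp add: s_def)
  qed
  have sq: "s * s = 1" unfolding s_def by (rule Tsq) (use nin dist in auto)
  have "s * (\<tau> * \<chi> \<eta> * T e' src (insert dst (insert src \<rho>)) * (-2 * T dst e' (insert src \<eta>)))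
      = -2 * \<tau> * \<chi> \<eta> * (s * (T e' src (insert dst (insert src \<rho>)) * T dst e' (insert src \<eta>)))"
    by (simp add: algebra_simps)
  also have "\<dots> = 2 * \<tau> * \<chi> \<eta>" unfolding t2 using sq by simp
  finally have fin: "s * (\<tau> * \<chi> \<eta> * T e' src (insert dst (insert src \<rho>)) * (-2 * T dst e' (insert src \<eta>))) = 2 * \<tau> * \<chi> \<eta>" .
  show ?thesis
    apply (subst if_P[OF c1], subst if_not_P[OF c2])
    unfolding z1 H P s_def[symmetric] using fin by (simp only: diff_zero mult.assoc)
next
  case False
  define s where "s = T dst src (insert src \<eta>)"
  have c1: "\<not> ((dst \<in> insert src \<eta>) \<noteq> (e' \<in> insert src \<eta>))" using False nin dist by auto
  have c2: "(dst \<in> insert dst \<eta>) \<noteq> (e' \<in> insert dst \<eta>)" using False dist by auto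
  have z2: "flip dst (flip e' (insert dst \<eta>)) = insert e' \<eta>" using False nin dist by (auto simp: flip_def)
  have H: "hubbard L U (insert dst \<eta>) (insert e' \<eta>) = -2 * T dst e' (insert e' \<eta>)"
  proof -
    have "insert dst (insert e' \<eta> - {e'}) = insert dst \<eta>" using False by auto
    then show ?thesis using H_val[OF L3 hp, of "insert e' \<eta>" U] md False nin dist by auto
  qed
  have P: "Pw (insert e' \<eta>) (insert src \<eta>) = \<tau> * \<chi> \<eta> * T e' src (insert src \<eta>)"
  proof -
    have "insert e' \<eta> = insert e' (insert src \<eta> - {src})" using nin by auto
    moreover have "\<chi> (insert src \<eta>) = \<chi> \<eta>" by (rule chi) auto
    ultimately show ?thesis using Pw[of "insert src \<eta>" "insert e' \<eta>"] md by auto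
  qed
  have t1: "T dst e' (insert e' \<eta>) * T e' src (insert src \<eta>) = s"
    unfolding s_def by (rule T1) (use False nin dist in auto)
  have sq: "s * s = 1" unfolding s_def by (rule Tsq) (use nin dist in auto)
  have "s * (0 - (-2 * T dst e' (insert e' \<eta>)) * (\<tau> * \<chi> \<eta> * T e' src (insert src \<eta>)))
      = 2 * \<tau> * \<chi> \<eta> * (s * (T dst e' (insert e' \<eta>) * T e' src (insert src \<eta>)))"
    by (simp add: algebra_simps)
  also have "\<dots> = 2 * \<tau> * \<chi> \<eta>" unfolding t1 sq by simp
  finally have fin: "s * (0 - (-2 * T dst e' (insert e' \<eta>)) * (\<tau> * \<chi> \<eta> * T e' src (insert src \<eta>))) = 2 * \<tau> * \<chi> \<eta>" .
  show ?thesis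
    apply (subst if_not_P[OF c1], subst if_P[OF c2])
    unfolding z2 H P s_def[symmetric] using fin by (simp only: mult.assoc)
qed


definition shaped :: "nat \<Rightarrow> nat \<Rightarrow> spin \<Rightarrow> spin \<Rightarrow> bool \<Rightarrow> nat \<Rightarrow> nat \<Rightarrow> nat \<Rightarrow> (nat \<Rightarrow> spin \<Rightarrow> fop) \<Rightarrow> bool" where
  "shaped L k \<sigma> \<mu> b n l j \<epsilon> \<longleftrightarrow> l = k \<and> j mod L = n mod L \<and> \<epsilon> 0 \<sigma> = cs b \<and> \<epsilon> (k-1) \<mu> = cs (\<not> b)
     \<and> (\<forall>t<k. \<forall>s. (t,s) \<noteq> (0,\<sigma>) \<longrightarrow> (t,s) \<noteq> (k-1,\<mu>) \<longrightarrow> \<epsilon> t s = FZ \<or> \<epsilon> t s = FI)"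

lemma shape2:
  fixes L k n l j :: nat
  assumes k2: "2 \<le> k" and Lk: "2*k+2 \<le> L" and l1: "1 \<le> l" and lk: "l \<le> k"
    and nz: "basis_elem L l j \<epsilon> u v \<noteq> 0"
    and a1: "a1 = mode L n \<sigma>" and a2: "a2 = mode L (n+k-1) \<mu>"
    and mem: "\<And>m. m \<notin> {a1,a2} \<Longrightarrow> (m \<in> u \<longleftrightarrow> m \<in> v)" "(a1\<in>u) \<noteq> (a1\<in>v)" "(a2\<in>u) \<noteq> (a2\<in>v)"
       "(a1\<in>v) \<noteq> (a2\<in>v)"
    and bv: "b \<longleftrightarrow> a1 \<notin> v"
  shows "shaped L k \<sigma> \<mu> b n l j \<epsilon>"
proof -
  define src where "src = (if a1 \<in> v then a1 else a2)"
  define dst where "dst = (if a1 \<in> v then a2 else a1)"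
  have a12: "a1 \<noteq> a2" using mem(4) by auto
  have "l = k \<and> j mod L = n mod L \<and> \<epsilon> 0 \<sigma> = (if src = a1 then FC else FCd)
     \<and> \<epsilon> (k-1) \<mu> = (if src = a2 then FC else FCd)
     \<and> (\<forall>t<k. \<forall>s. (t,s) \<noteq> (0,\<sigma>) \<longrightarrow> (t,s) \<noteq> (k-1,\<mu>) \<longrightarrow> \<epsilon> t s = FZ \<or> \<epsilon> t s = FI)"
    by (rule shape[OF k2 Lk l1 lk nz a1 a2, of src dst])
       (use mem a12 in \<open>auto simp: src_def dst_def\<close>)
  then show ?thesis using bv a12 by (auto simp: shaped_def src_def dst_def cs_def)
qed

lemma shaped_wvalue:
  fixes L k n j :: nat
  assumes k2: "2 \<le> k" and Lk: "2*k+2 \<le> L" and sh: "shaped L k \<sigma> \<mu> b n l j \<epsilon>"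
    and a1: "a1 = mode L n \<sigma>" and a2: "a2 = mode L (n+k-1) \<mu>"
    and sd: "(src = a1 \<and> dst = a2) \<or> (src = a2 \<and> dst = a1)" and bb: "b \<longleftrightarrow> dst = a1" and a12: "a1 \<noteq> a2"
    and v: "v \<subseteq> modes L"
  shows "basis_elem L l j \<epsilon> u v = (if u = insert dst (v - {src})
           then wtau \<sigma> \<mu> b * zprod (blist L k j \<epsilon>) v * T dst src v else 0)"
proof -
  have s: "l = k" "j mod L = n mod L" "\<epsilon> 0 \<sigma> = cs b" "\<epsilon> (k-1) \<mu> = cs (\<not> b)"
    "\<And>t s. t < k \<Longrightarrow> (t,s) \<noteq> (0,\<sigma>) \<Longrightarrow> (t,s) \<noteq> (k-1,\<mu>) \<Longrightarrow> \<epsilon> t s = FZ \<or> \<epsilon> t s = FI"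
    using sh by (auto simp: shaped_def)
  have E1: "\<epsilon> 0 \<sigma> = (if src = a1 then FC else FCd)" using s(3) sd bb a12 by (auto simp: cs_def)
  have E2: "\<epsilon> (k-1) \<mu> = (if src = a2 then FC else FCd)" using s(4) sd bb a12 by (auto simp: cs_def)
  show ?thesis using wvalue[OF k2 Lk s(2) a1 a2 sd bb E1 E2 s(5), of u v] v s(1) by simp
qed


lemma winpos:
  fixes L k n j t :: nat
  assumes Lk: "2*k+2 \<le> L" and k2: "2 \<le> k" and jn: "j mod L = n mod L" and t: "t < k"
  shows "mode L (j+t) s = mode L n \<sigma> \<longleftrightarrow> t = 0 \<and> s = \<sigma>"
    and "mode L (j+t) s = mode L (n+k-1) \<mu> \<longleftrightarrow> t = k-1 \<and> s = \<mu>"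
    and "mode L (j+t) s \<in> W L n k"
proof -
  have "(j+t) mod L = n mod L \<longleftrightarrow> t = 0"
    using win_inj[of j t L 0] t Lk jn by auto
  then show "mode L (j+t) s = mode L n \<sigma> \<longleftrightarrow> t = 0 \<and> s = \<sigma>" by (auto simp: mode_eq)
  have jn2: "(j + (k-1)) mod L = (n+k-1) mod L"
    using jn k2 modeq_shift[of j "k-1" L n] by (simp add: Nat.add_diff_assoc)
  have "(j+t) mod L = (n+k-1) mod L \<longleftrightarrow> t = k-1"
    using win_inj[of j t L "k-1"] t Lk jn2 by auto
  then show "mode L (j+t) s = mode L (n+k-1) \<mu> \<longleftrightarrow> t = k-1 \<and> s = \<mu>" by (auto simp: mode_eq)
  have "mode L (j+t) s = mode L (n+t) s" using jn modeq_shift[of j t L n] by (simp add: mode_eq)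
  then show "mode L (j+t) s \<in> W L n k" using t by (auto simp: W_def)
qed

lemma WL:
  fixes L k n l j :: nat and U :: real
  assumes k2: "2 \<le> k" and Lk: "2*k+2 \<le> L" and l1: "1 \<le> l" and lk: "l \<le> k"
    and a1: "a1 = mode L n \<sigma>" and a2: "a2 = mode L (n+k-1) \<mu>"
    and fe: "(f = a1 \<and> e' = a2) \<or> (f = a2 \<and> e' = a1)"
    and sd: "(e = src \<and> f = dst) \<or> (e = dst \<and> f = src)"
    and a12: "a1 \<noteq> a2" and ea: "e \<notin> {a1,a2}"
    and hp: "hoppair L e e'" and eout: "e \<notin> W L n k"
    and bdir: "b \<longleftrightarrow> a1 = (if e = src then dst else e')"
    and nin: "src \<notin> \<eta>" "dst \<notin> \<eta>" and md: "insert src (insert dst (insert e' \<eta>)) \<subseteq> modes L"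
  shows "T dst src (insert src \<eta>) *
     ((if (e \<in> insert src \<eta>) \<noteq> (e' \<in> insert src \<eta>)
       then basis_elem L l j \<epsilon> (insert dst \<eta>) (flip e (flip e' (insert src \<eta>))) * hubbard L U (flip e (flip e' (insert src \<eta>))) (insert src \<eta>) else 0)
    - (if (e \<in> insert dst \<eta>) \<noteq> (e' \<in> insert dst \<eta>)
       then hubbard L U (insert dst \<eta>) (flip e (flip e' (insert dst \<eta>))) * basis_elem L l j \<epsilon> (flip e (flip e' (insert dst \<eta>))) (insert src \<eta>) else 0))
   = (if shaped L k \<sigma> \<mu> b n l j \<epsilon> then (if e = src then -2 else 2) * wtau \<sigma> \<mu> b * zprod (blist L k j \<epsilon>) \<eta> else 0)"
proof -
  have L3: "3 \<le> L" using Lk k2 by simp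
  have sdne: "src \<noteq> dst" using sd fe ea by auto
  have e'ne: "e' \<noteq> src" "e' \<noteq> dst" using sd fe ea a12 by auto
  show ?thesis
  proof (cases "shaped L k \<sigma> \<mu> b n l j \<epsilon>")
    case True
    have lk': "l = k" and jn: "j mod L = n mod L" using True by (auto simp: shaped_def)
    have chi: "zprod (blist L k j \<epsilon>) v = zprod (blist L k j \<epsilon>) \<eta>"
      if "\<And>m. m \<notin> {src,dst,e'} \<Longrightarrow> (m\<in>v \<longleftrightarrow> m\<in>\<eta>)" for v
    proof (rule zprod_cong)
      fix ee assume ee: "ee \<in> set (blist L k j \<epsilon>)" "fst ee = FZ"
      have "\<exists>t s. t < k \<and> ee = (\<epsilon> t s, mode L (j+t) s)"
        using ee(1) unfolding blist_def by auto
      then obtain t s where ts: "t < k" "ee = (\<epsilon> t s, mode L (j+t) s)" by blast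
      have "(t,s) \<noteq> (0,\<sigma>)" "(t,s) \<noteq> (k-1,\<mu>)" using True ee(2) ts by (auto simp: shaped_def cs_def split: if_splits)
      then have "mode L (j+t) s \<noteq> a1" "mode L (j+t) s \<noteq> a2" "mode L (j+t) s \<noteq> e"
        using winpos(1)[OF Lk k2 jn ts(1), of s \<sigma>] winpos(2)[OF Lk k2 jn ts(1), of s \<mu>] winpos(3)[OF Lk k2 jn ts(1), of s] a1 a2 eout by auto
      then have "mode L (j+t) s \<notin> {src,dst,e'}" using sd fe by auto
      then show "(snd ee \<in> v) = (snd ee \<in> \<eta>)" using that ts by auto
    qed
    show ?thesis
    proof (cases "e = src")
      case True
      have f: "f = dst" using sd True sdne by auto
      have Pw: "basis_elem L l j \<epsilon> u v = (if u = insert dst (v - {e'}) then wtau \<sigma> \<mu> b * zprod (blist L k j \<epsilon>) v * T dst e' v else 0)"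
        if "v \<subseteq> modes L" for u v
        by (rule shaped_wvalue[OF k2 Lk \<open>shaped L k \<sigma> \<mu> b n l j \<epsilon>\<close> a1 a2 _ _ a12 that])
           (use fe f bdir True in auto)
      have eqn: "T dst src (insert src \<eta>) *
     ((if (src \<in> insert src \<eta>) \<noteq> (e' \<in> insert src \<eta>)
       then basis_elem L l j \<epsilon> (insert dst \<eta>) (flip src (flip e' (insert src \<eta>))) * hubbard L U (flip src (flip e' (insert src \<eta>))) (insert src \<eta>) else 0)
    - (if (src \<in> insert dst \<eta>) \<noteq> (e' \<in> insert dst \<eta>)
       then hubbard L U (insert dst \<eta>) (flip src (flip e' (insert dst \<eta>))) * basis_elem L l j \<epsilon> (flip src (flip e' (insert dst \<eta>))) (insert src \<eta>) else 0))
       = -2 * wtau \<sigma> \<mu> b * zprod (blist L k j \<epsilon>) \<eta>"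
        by (rule term_src[OF L3 _ sdne e'ne(1)[symmetric] e'ne(2)[symmetric] nin md Pw chi])
           (use hp True in auto)
      have r: "(if shaped L k \<sigma> \<mu> b n l j \<epsilon> then (if e = src then -2 else 2) * wtau \<sigma> \<mu> b * zprod (blist L k j \<epsilon>) \<eta> else 0)
         = -2 * wtau \<sigma> \<mu> b * zprod (blist L k j \<epsilon>) \<eta>" using True \<open>shaped L k \<sigma> \<mu> b n l j \<epsilon>\<close> by simp
      show ?thesis unfolding r unfolding True by (rule eqn)
    next
      case False
      have e: "e = dst" and f: "f = src" using sd False by auto
      have Pw: "basis_elem L l j \<epsilon> u v = (if u = insert e' (v - {src}) then wtau \<sigma> \<mu> b * zprod (blist L k j \<epsilon>) v * T e' src v else 0)"
        if "v \<subseteq> modes L" for u v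
        by (rule shaped_wvalue[OF k2 Lk \<open>shaped L k \<sigma> \<mu> b n l j \<epsilon>\<close> a1 a2 _ _ a12 that])
           (use fe f bdir False in auto)
      have eqn: "T dst src (insert src \<eta>) *
     ((if (dst \<in> insert src \<eta>) \<noteq> (e' \<in> insert src \<eta>)
       then basis_elem L l j \<epsilon> (insert dst \<eta>) (flip dst (flip e' (insert src \<eta>))) * hubbard L U (flip dst (flip e' (insert src \<eta>))) (insert src \<eta>) else 0)
    - (if (dst \<in> insert dst \<eta>) \<noteq> (e' \<in> insert dst \<eta>)
       then hubbard L U (insert dst \<eta>) (flip dst (flip e' (insert dst \<eta>))) * basis_elem L l j \<epsilon> (flip dst (flip e' (insert dst \<eta>))) (insert src \<eta>) else 0))
       = 2 * wtau \<sigma> \<mu> b * zprod (blist L k j \<epsilon>) \<eta>"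
        by (rule term_dst[OF L3 _ sdne e'ne(1)[symmetric] e'ne(2)[symmetric] nin md Pw chi])
           (use hp e in auto)
      have r: "(if shaped L k \<sigma> \<mu> b n l j \<epsilon> then (if e = src then -2 else 2) * wtau \<sigma> \<mu> b * zprod (blist L k j \<epsilon>) \<eta> else 0)
         = 2 * wtau \<sigma> \<mu> b * zprod (blist L k j \<epsilon>) \<eta>" using False \<open>shaped L k \<sigma> \<mu> b n l j \<epsilon>\<close> by simp
      show ?thesis unfolding r unfolding e by (rule eqn)
    qed
  next
    case False
    have z1: "basis_elem L l j \<epsilon> (insert dst \<eta>) (flip e (flip e' (insert src \<eta>))) = 0"
      if c: "(e \<in> insert src \<eta>) \<noteq> (e' \<in> insert src \<eta>)"
    proof (rule ccontr)
      assume nz: "basis_elem L l j \<epsilon> (insert dst \<eta>) (flip e (flip e' (insert src \<eta>))) \<noteq> 0"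
      have "shaped L k \<sigma> \<mu> b n l j \<epsilon>"
        by (rule shape2[OF k2 Lk l1 lk nz a1 a2])
           (use c fe sd a12 ea bdir nin sdne e'ne in \<open>auto simp: flip_def split: if_splits\<close>)
      then show False using False by simp
    qed
    have z2: "basis_elem L l j \<epsilon> (flip e (flip e' (insert dst \<eta>))) (insert src \<eta>) = 0"
      if c: "(e \<in> insert dst \<eta>) \<noteq> (e' \<in> insert dst \<eta>)"
    proof (rule ccontr)
      assume nz: "basis_elem L l j \<epsilon> (flip e (flip e' (insert dst \<eta>))) (insert src \<eta>) \<noteq> 0"
      have "shaped L k \<sigma> \<mu> b n l j \<epsilon>"
        by (rule shape2[OF k2 Lk l1 lk nz a1 a2])
           (use c fe sd a12 ea bdir nin sdne e'ne in \<open>auto simp: flip_def split: if_splits\<close>)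
      then show False using False by simp
    qed
    show ?thesis using False z1 z2 by simp
  qed
qed


lemma sum2:
  fixes g :: "nat set \<Rightarrow> complex"
  assumes S: "finite S" and ch: "\<And>z. z \<in> S \<Longrightarrow> g z \<noteq> 0 \<Longrightarrow> (z = z1 \<and> c1) \<or> (z = z2 \<and> c2)"
    and ne: "z1 \<noteq> z2" and m1: "c1 \<Longrightarrow> z1 \<in> S" and m2: "c2 \<Longrightarrow> z2 \<in> S"
  shows "sum g S = (if c1 then g z1 else 0) + (if c2 then g z2 else 0)"
proof -
  have "sum g S = (\<Sum>z\<in>S. (if c1 then (if z = z1 then g z1 else 0) else 0) + (if c2 then (if z = z2 then g z2 else 0) else 0))"
  proof (rule sum.cong[OF refl])
    fix z assume z: "z \<in> S"
    show "g z = (if c1 then (if z = z1 then g z1 else 0) else 0) + (if c2 then (if z = z2 then g z2 else 0) else 0)"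
    proof (cases "g z = 0")
      case True thus ?thesis using ne by auto
    next
      case False thus ?thesis using ch[OF z False] ne by auto
    qed
  qed
  also have "\<dots> = (if c1 then g z1 else 0) + (if c2 then g z2 else 0)"
    using S m1 m2 by (simp add: sum.distrib)
  finally show ?thesis .
qed

lemma flip_comm: "flip a (flip d Y) = flip d (flip a Y)"
  by (auto simp: flip_def)

locale chain =
  fixes L k :: nat and U :: real and \<sigma> \<mu> :: spin and b :: bool and i :: nat
  assumes k2: "2 \<le> k" and Lk: "2*k+2 \<le> L" and i1: "1 \<le> i" and iL: "i \<le> L"
begin

definition "A = mode L i \<sigma>"
definition "B = mode L (i+k) \<mu>"
definition "C = mode L (i+k-1) \<mu>"
definition "D = mode L (i+1) \<sigma>"
definition "src = (if b then B else A)"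
definition "dst = (if b then A else B)"
definition "M = W L i (k+1) - {A, B}"

lemma L0: "0 < L" and L3: "3 \<le> L" using k2 Lk by auto

lemma dist: "A \<noteq> B" "A \<noteq> C" "A \<noteq> D" "B \<noteq> C" "B \<noteq> D"
proof -
  show "A \<noteq> B" using noshift[of k L i] k2 Lk by (auto simp: A_def B_def mode_eq)
  have "k - 1 < L" using Lk by linarith
  then show "A \<noteq> C" using noshift[of "k-1" L i] k2 by (auto simp: A_def C_def mode_eq)
  show "A \<noteq> D" using noshift[of 1 L i] k2 Lk by (auto simp: A_def D_def mode_eq)
  have "i + k = (i+k-1) + 1" using k2 by simp
  then show "B \<noteq> C" using noshift[of 1 L "i+k-1"] k2 Lk by (auto simp: B_def C_def mode_eq)
  have "i + k = (i+1) + (k-1)" using k2 by simp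
  then show "B \<noteq> D" using noshift[of "k-1" L "i+1"] k2 Lk by (auto simp: B_def D_def mode_eq)
qed

lemma hopAD: "hoppair L A D" by (auto simp: hoppair_def A_def D_def)

lemma hopBC: "hoppair L B C"
proof -
  have "i + k = (i+k-1) + 1" using k2 by simp
  then show ?thesis unfolding hoppair_def B_def C_def by (metis insert_commute)
qed

lemma Bout: "B \<notin> W L i k"
proof
  assume "B \<in> W L i k"
  then obtain t where "t < k" "(i+t) mod L = (i+k) mod L" using inW by (metis B_def)
  then show False using win_inj[of i t L k] Lk by auto
qed

lemma Aout: "A \<notin> W L (i+1) k"
proof
  assume "A \<in> W L (i+1) k"
  then obtain t where "t < k" "(i+1+t) mod L = i mod L" using inW by (metis A_def)
  then show False using noshift[of "t+1" L i] Lk by (auto simp: add.assoc)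
qed

lemma inW1: "A \<in> W L i (k+1)" "B \<in> W L i (k+1)" "C \<in> W L i (k+1)" "D \<in> W L i (k+1)"
proof -
  show "A \<in> W L i (k+1)" unfolding W_def A_def by (rule CollectI, rule exI[of _ 0]) auto
  show "B \<in> W L i (k+1)" unfolding W_def B_def by (rule CollectI, rule exI[of _ k]) auto
  show "C \<in> W L i (k+1)" unfolding W_def C_def using k2 by (intro CollectI exI[of _ "k-1"]) auto
  show "D \<in> W L i (k+1)" unfolding W_def D_def using k2 by (intro CollectI exI[of _ 1]) auto
qed

lemma W_modes: "W L j l \<subseteq> modes L" using L0 mode_in by (auto simp: W_def)

lemma M_fin: "finite M" and M_modes: "M \<subseteq> modes L"
  using W_modes finite_subset[OF W_modes finite_modes] by (auto simp: M_def)

lemma ABm: "A \<in> modes L" "B \<in> modes L" "C \<in> modes L" "D \<in> modes L"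
  using inW1 W_modes by auto

lemma sd: "(src = A \<and> dst = B) \<or> (src = B \<and> dst = A)" by (auto simp: src_def dst_def)

lemma AB_notboth: assumes "l \<le> k" shows "\<not> (A \<in> W L j l \<and> B \<in> W L j l)"
proof
  assume "A \<in> W L j l \<and> B \<in> W L j l"
  then obtain t1 t2 where "t1 < l" "(j+t1) mod L = i mod L" "t2 < l" "(j+t2) mod L = (i+k) mod L"
    using inW by (metis A_def B_def)
  then show False using sep[of j t1 L i t2 k l] assms Lk by auto
qed

lemma hopchar:
  assumes lk: "l \<le> k" and XY: "\<And>m. ((m\<in>X) \<noteq> (m\<in>Y)) \<longleftrightarrow> m\<in>{A,B}"
    and Z: "Z = insert p (Y - {q})" "q \<in> Y" "p \<notin> Y" and hp: "hoppair L p q"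
    and supp: "\<And>m. m \<notin> W L j l \<Longrightarrow> (m\<in>X \<longleftrightarrow> m\<in>Z)"
  shows "(Z = flip A (flip D Y) \<and> (A\<in>Y) \<noteq> (D\<in>Y)) \<or> (Z = flip B (flip C Y) \<and> (B\<in>Y) \<noteq> (C\<in>Y))"
proof -
  have pq: "p \<noteq> q" using Z by auto
  have Wc: "m \<in> W L j l" if "(m \<in> {mode L i \<sigma>, mode L (i+k) \<mu>}) \<noteq> (m \<in> {p,q})" for m
  proof (rule ccontr)
    assume "m \<notin> W L j l"
    then have "m\<in>X \<longleftrightarrow> m\<in>Z" using supp by blast
    moreover have "(m \<in> {A,B}) \<noteq> (m \<in> {p,q})" using that by (simp add: A_def B_def)
    ultimately show False using XY[of m] Z pq by auto
  qed
  have "{p,q} = {mode L i \<sigma>, mode L (i+1) \<sigma>} \<or> {p,q} = {mode L (i+k) \<mu>, mode L (i+k-1) \<mu>}"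
    by (rule classify[OF k2 Lk lk hp Wc])
  then have "{p,q} = {A,D} \<or> {p,q} = {B,C}" by (simp add: A_def B_def C_def D_def)
  then show ?thesis using Z pq dist by (auto simp: doubleton_eq_iff flip_def)
qed

end


context chain begin

definition "xs \<eta> = insert dst \<eta>"
definition "ys \<eta> = insert src \<eta>"

lemma AB_notin: "\<eta> \<subseteq> M \<Longrightarrow> A \<notin> \<eta> \<and> B \<notin> \<eta>" by (auto simp: M_def)

lemma XY: "\<eta> \<subseteq> M \<Longrightarrow> ((m \<in> xs \<eta>) \<noteq> (m \<in> ys \<eta>)) \<longleftrightarrow> m \<in> {A,B}"
  using AB_notin[of \<eta>] dist(1) unfolding xs_def ys_def src_def dst_def by (cases b) auto

lemma xy_modes: "\<eta> \<subseteq> M \<Longrightarrow> xs \<eta> \<subseteq> modes L \<and> ys \<eta> \<subseteq> modes L"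
  using M_modes ABm unfolding xs_def ys_def src_def dst_def by (cases b) auto

lemma Pxy0: assumes lk: "l \<le> k" and eta: "\<eta> \<subseteq> M"
  shows "basis_elem L l j \<epsilon> (xs \<eta>) (ys \<eta>) = 0"
proof (rule ccontr)
  assume nz: "basis_elem L l j \<epsilon> (xs \<eta>) (ys \<eta>) \<noteq> 0"
  have "A \<in> W L j l" using basis_support[OF L0 nz, of A] XY[OF eta, of A] by auto
  moreover have "B \<in> W L j l" using basis_support[OF L0 nz, of B] XY[OF eta, of B] by auto
  ultimately show False using AB_notboth[OF lk] by blast
qed

lemma flip_modes: "Y \<subseteq> modes L \<Longrightarrow> a \<in> modes L \<Longrightarrow> flip a Y \<subseteq> modes L"
  by (auto simp: flip_def)

lemma z12ne: "flip A (flip D Y) \<noteq> flip B (flip C Y)"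
proof -
  have "(A \<in> flip A (flip D Y)) \<noteq> (A \<in> flip B (flip C Y))" using dist by (auto simp: flip_def)
  then show ?thesis by force
qed

lemma FH: assumes lk: "l \<le> k" and eta: "\<eta> \<subseteq> M"
  shows "op_mult L (basis_elem L l j \<epsilon>) (hubbard L U) (xs \<eta>) (ys \<eta>) =
    (if (A \<in> ys \<eta>) \<noteq> (D \<in> ys \<eta>) then basis_elem L l j \<epsilon> (xs \<eta>) (flip A (flip D (ys \<eta>))) * hubbard L U (flip A (flip D (ys \<eta>))) (ys \<eta>) else 0)
  + (if (B \<in> ys \<eta>) \<noteq> (C \<in> ys \<eta>) then basis_elem L l j \<epsilon> (xs \<eta>) (flip B (flip C (ys \<eta>))) * hubbard L U (flip B (flip C (ys \<eta>))) (ys \<eta>) else 0)"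
  unfolding op_mult_def
proof (rule sum2[where g = "\<lambda>z. basis_elem L l j \<epsilon> (xs \<eta>) z * hubbard L U z (ys \<eta>)"
    and ?z1.0 = "flip A (flip D (ys \<eta>))" and ?z2.0 = "flip B (flip C (ys \<eta>))"
    and ?c1.0 = "(A \<in> ys \<eta>) \<noteq> (D \<in> ys \<eta>)" and ?c2.0 = "(B \<in> ys \<eta>) \<noteq> (C \<in> ys \<eta>)"])
  show "finite (Pow (modes L))" by simp
  show "flip A (flip D (ys \<eta>)) \<noteq> flip B (flip C (ys \<eta>))" by (rule z12ne)
  have "flip A (flip D (ys \<eta>)) \<subseteq> modes L" "flip B (flip C (ys \<eta>)) \<subseteq> modes L"
    by (intro flip_modes; use xy_modes[OF eta] ABm in simp)+
  then show "flip A (flip D (ys \<eta>)) \<in> Pow (modes L)" "flip B (flip C (ys \<eta>)) \<in> Pow (modes L)" by auto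
next
  fix z assume z: "z \<in> Pow (modes L)"
    and nz: "basis_elem L l j \<epsilon> (xs \<eta>) z * hubbard L U z (ys \<eta>) \<noteq> 0"
  have nz1: "basis_elem L l j \<epsilon> (xs \<eta>) z \<noteq> 0" and nz2: "hubbard L U z (ys \<eta>) \<noteq> 0" using nz by auto
  have zy: "z \<noteq> ys \<eta>" using nz1 Pxy0[OF lk eta] by auto
  obtain p q where pq: "hoppair L p q" "q \<in> ys \<eta>" "p \<notin> ys \<eta>" "z = insert p (ys \<eta> - {q})"
    using H_nz[OF L0 zy nz2] by blast
  show "(z = flip A (flip D (ys \<eta>)) \<and> (A \<in> ys \<eta>) \<noteq> (D \<in> ys \<eta>)) \<or>
        (z = flip B (flip C (ys \<eta>)) \<and> (B \<in> ys \<eta>) \<noteq> (C \<in> ys \<eta>))"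
    by (rule hopchar[OF lk XY[OF eta] pq(4,2,3,1) basis_support[OF L0 nz1]])
qed

lemma HF: assumes lk: "l \<le> k" and eta: "\<eta> \<subseteq> M"
  shows "op_mult L (hubbard L U) (basis_elem L l j \<epsilon>) (xs \<eta>) (ys \<eta>) =
    (if (A \<in> xs \<eta>) \<noteq> (D \<in> xs \<eta>) then hubbard L U (xs \<eta>) (flip A (flip D (xs \<eta>))) * basis_elem L l j \<epsilon> (flip A (flip D (xs \<eta>))) (ys \<eta>) else 0)
  + (if (B \<in> xs \<eta>) \<noteq> (C \<in> xs \<eta>) then hubbard L U (xs \<eta>) (flip B (flip C (xs \<eta>))) * basis_elem L l j \<epsilon> (flip B (flip C (xs \<eta>))) (ys \<eta>) else 0)"
  unfolding op_mult_def
proof (rule sum2[where g = "\<lambda>z. hubbard L U (xs \<eta>) z * basis_elem L l j \<epsilon> z (ys \<eta>)"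
    and ?z1.0 = "flip A (flip D (xs \<eta>))" and ?z2.0 = "flip B (flip C (xs \<eta>))"
    and ?c1.0 = "(A \<in> xs \<eta>) \<noteq> (D \<in> xs \<eta>)" and ?c2.0 = "(B \<in> xs \<eta>) \<noteq> (C \<in> xs \<eta>)"])
  show "finite (Pow (modes L))" by simp
  show "flip A (flip D (xs \<eta>)) \<noteq> flip B (flip C (xs \<eta>))" by (rule z12ne)
  have "flip A (flip D (xs \<eta>)) \<subseteq> modes L" "flip B (flip C (xs \<eta>)) \<subseteq> modes L"
    by (intro flip_modes; use xy_modes[OF eta] ABm in simp)+
  then show "flip A (flip D (xs \<eta>)) \<in> Pow (modes L)" "flip B (flip C (xs \<eta>)) \<in> Pow (modes L)" by auto
next
  fix z assume z: "z \<in> Pow (modes L)"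
    and nz: "hubbard L U (xs \<eta>) z * basis_elem L l j \<epsilon> z (ys \<eta>) \<noteq> 0"
  have nz1: "basis_elem L l j \<epsilon> z (ys \<eta>) \<noteq> 0" and nz2: "hubbard L U (xs \<eta>) z \<noteq> 0" using nz by auto
  have zx: "xs \<eta> \<noteq> z" using nz1 Pxy0[OF lk eta] by auto
  obtain p q where pq: "hoppair L p q" "z \<subseteq> modes L" "q \<in> z" "p \<notin> z" "xs \<eta> = insert p (z - {q})"
    using H_nz[OF L0 zx nz2] by blast
  have pq2: "z = insert q (xs \<eta> - {p})" "p \<in> xs \<eta>" "q \<notin> xs \<eta>" using pq by auto
  have XY': "((m \<in> ys \<eta>) \<noteq> (m \<in> xs \<eta>)) \<longleftrightarrow> m \<in> {A,B}" for m using XY[OF eta, of m] by auto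
  show "(z = flip A (flip D (xs \<eta>)) \<and> (A \<in> xs \<eta>) \<noteq> (D \<in> xs \<eta>)) \<or>
        (z = flip B (flip C (xs \<eta>)) \<and> (B \<in> xs \<eta>) \<noteq> (C \<in> xs \<eta>))"
    by (rule hopchar[OF lk XY' pq2 hoppair_sym[OF pq(1)]]) (use basis_support[OF L0 nz1] in blast)
qed

end


context chain begin

definition "kap = (if b then -2 else 2) * wtau \<sigma> \<mu> b"

lemma src_dst_nin: "\<eta> \<subseteq> M \<Longrightarrow> src \<notin> \<eta> \<and> dst \<notin> \<eta>"
  using AB_notin[of \<eta>] unfolding src_def dst_def by (cases b) auto

lemma md_ok: "\<eta> \<subseteq> M \<Longrightarrow> e' \<in> modes L \<Longrightarrow> insert src (insert dst (insert e' \<eta>)) \<subseteq> modes L"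
  using M_modes ABm unfolding src_def dst_def by (cases b) auto

lemma pereta: assumes l1: "1 \<le> l" and lk: "l \<le> k" and eta: "\<eta> \<subseteq> M"
  shows "T dst src (insert src \<eta>) * (op_mult L (basis_elem L l j \<epsilon>) (hubbard L U) (xs \<eta>) (ys \<eta>)
           - op_mult L (hubbard L U) (basis_elem L l j \<epsilon>) (xs \<eta>) (ys \<eta>))
   = (if shaped L k \<sigma> \<mu> b i l j \<epsilon> then kap * zprod (blist L k j \<epsilon>) \<eta> else 0)
   - (if shaped L k \<sigma> \<mu> b (i+1) l j \<epsilon> then kap * zprod (blist L k j \<epsilon>) \<eta> else 0)"
proof -
  have nin: "src \<notin> \<eta>" "dst \<notin> \<eta>" using src_dst_nin[OF eta] by auto
  have sd1: "(B = src \<and> A = dst) \<or> (B = dst \<and> A = src)" unfolding src_def dst_def by (cases b) auto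
  have sd2: "(A = src \<and> B = dst) \<or> (A = dst \<and> B = src)" unfolding src_def dst_def by (cases b) auto
  have bd1: "b \<longleftrightarrow> A = (if B = src then dst else C)" using dist unfolding src_def dst_def by (cases b) auto
  have bd2: "b \<longleftrightarrow> D = (if A = src then dst else D)" using dist unfolding src_def dst_def by (cases b) auto
  have a2': "B = mode L (i+1+k-1) \<mu>" using k2 by (simp add: B_def)
  have fe1: "(A = A \<and> C = C) \<or> (A = C \<and> C = A)" by simp
  have ea1: "B \<notin> {A, C}" using dist by auto
  have fe2: "(B = D \<and> D = B) \<or> (B = B \<and> D = D)" by simp
  have ea2: "A \<notin> {D, B}" using dist by auto
  have a12': "D \<noteq> B" using dist by auto
  note w1 = WL[OF k2 Lk l1 lk A_def C_def fe1 sd1 dist(2) ea1 hopBC Bout bd1 nin md_ok[OF eta ABm(3)], where j = j and U = U and \<epsilon> = \<epsilon>]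
  note w2 = WL[OF k2 Lk l1 lk D_def a2' fe2 sd2 a12' ea2 hopAD Aout bd2 nin md_ok[OF eta ABm(4)], where j = j and U = U and \<epsilon> = \<epsilon>]
  have c1: "(if B = src then -2 else 2) * wtau \<sigma> \<mu> b = kap" unfolding kap_def src_def using dist by (cases b) auto
  have c2: "(if A = src then -2 else 2) * wtau \<sigma> \<mu> b = - kap" unfolding kap_def src_def using dist by (cases b) auto
  define s where "s = T dst src (insert src \<eta>)"
  define FA where "FA = (if (A \<in> insert src \<eta>) \<noteq> (D \<in> insert src \<eta>) then basis_elem L l j \<epsilon> (insert dst \<eta>) (flip A (flip D (insert src \<eta>))) * hubbard L U (flip A (flip D (insert src \<eta>))) (insert src \<eta>) else 0)"
  define FB where "FB = (if (B \<in> insert src \<eta>) \<noteq> (C \<in> insert src \<eta>) then basis_elem L l j \<epsilon> (insert dst \<eta>) (flip B (flip C (insert src \<eta>))) * hubbard L U (flip B (flip C (insert src \<eta>))) (insert src \<eta>) else 0)"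
  define HA where "HA = (if (A \<in> insert dst \<eta>) \<noteq> (D \<in> insert dst \<eta>) then hubbard L U (insert dst \<eta>) (flip A (flip D (insert dst \<eta>))) * basis_elem L l j \<epsilon> (flip A (flip D (insert dst \<eta>))) (insert src \<eta>) else 0)"
  define HB where "HB = (if (B \<in> insert dst \<eta>) \<noteq> (C \<in> insert dst \<eta>) then hubbard L U (insert dst \<eta>) (flip B (flip C (insert dst \<eta>))) * basis_elem L l j \<epsilon> (flip B (flip C (insert dst \<eta>))) (insert src \<eta>) else 0)"
  have fh: "op_mult L (basis_elem L l j \<epsilon>) (hubbard L U) (xs \<eta>) (ys \<eta>) = FA + FB"
    using FH[OF lk eta, of j \<epsilon>] unfolding FA_def FB_def xs_def ys_def .
  have hf: "op_mult L (hubbard L U) (basis_elem L l j \<epsilon>) (xs \<eta>) (ys \<eta>) = HA + HB"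
    using HF[OF lk eta, of j \<epsilon>] unfolding HA_def HB_def xs_def ys_def .
  have w1': "s * (FB - HB) = (if shaped L k \<sigma> \<mu> b i l j \<epsilon> then kap * zprod (blist L k j \<epsilon>) \<eta> else 0)"
    using w1 unfolding s_def[symmetric] FB_def[symmetric] HB_def[symmetric] c1 by simp
  have w2': "s * (FA - HA) = - (if shaped L k \<sigma> \<mu> b (i+1) l j \<epsilon> then kap * zprod (blist L k j \<epsilon>) \<eta> else 0)"
    using w2 unfolding s_def[symmetric] FA_def[symmetric] HA_def[symmetric] c2 by simp
  have "s * ((FA + FB) - (HA + HB)) = s * (FB - HB) + s * (FA - HA)" by (simp add: algebra_simps)
  then show ?thesis unfolding fh hf s_def[symmetric] w1' w2' by simp
qed

end


lemma UNIV_fop: "(UNIV :: fop set) = {FC, FCd, FZ, FI}"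
  by (auto, metis fop.exhaust)

lemma finite_fop[simp]: "finite (UNIV :: fop set)" by (simp add: UNIV_fop)

lemma finite_Ek: "finite {\<epsilon> :: nat \<Rightarrow> spin \<Rightarrow> fop. \<forall>t\<ge>k. \<forall>s. \<epsilon> t s = FI}"
proof -
  let ?E = "{\<epsilon> :: nat \<Rightarrow> spin \<Rightarrow> fop. \<forall>t\<ge>k. \<forall>s. \<epsilon> t s = FI}"
  let ?g = "\<lambda>\<epsilon> :: nat \<Rightarrow> spin \<Rightarrow> fop. map (\<lambda>t. (\<epsilon> t Up, \<epsilon> t Dn)) [0..<k]"
  have inj: "inj_on ?g ?E"
  proof (rule inj_onI)
    fix e1 e2 assume e: "e1 \<in> ?E" "e2 \<in> ?E" "?g e1 = ?g e2"
    show "e1 = e2"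
    proof (intro ext)
      fix t s
      show "e1 t s = e2 t s"
      proof (cases "t < k")
        case True
        then have "(e1 t Up, e1 t Dn) = (e2 t Up, e2 t Dn)" using e(3) by (simp add: map_eq_conv)
        then show ?thesis by (cases s) auto
      next
        case False thus ?thesis using e(1,2) by auto
      qed
    qed
  qed
  have "?g ` ?E \<subseteq> {xs. set xs \<subseteq> UNIV \<and> length xs = k}" by auto
  moreover have "finite {xs :: (fop \<times> fop) list. set xs \<subseteq> UNIV \<and> length xs = k}"
    by (rule finite_lists_length_eq) (metis finite_fop finite_SigmaI UNIV_Times_UNIV)
  ultimately have "finite (?g ` ?E)" by (rule finite_subset)
  then show ?thesis using inj by (rule finite_imageD)
qed

definition Idx :: "nat \<Rightarrow> nat \<Rightarrow> (nat \<times> nat \<times> (nat \<Rightarrow> spin \<Rightarrow> fop)) set" where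
  "Idx L k = {(l, i, \<epsilon>). l \<in> {1..k} \<and> i \<in> {1..L} \<and> valid_label l \<epsilon>}"

lemma finite_Idx: "finite (Idx L k)"
proof -
  have "Idx L k \<subseteq> {1..k} \<times> {1..L} \<times> {\<epsilon>. \<forall>t\<ge>k. \<forall>s. \<epsilon> t s = FI}"
    by (auto simp: Idx_def valid_label_def)
  then show ?thesis using finite_Ek[of k] by (meson finite_SigmaI finite_atLeastAtMost finite_subset)
qed

lemma local_op_Idx: "local_op L k coef = op_sum (\<lambda>(l, i, \<epsilon>). op_smult (coef l i \<epsilon>) (basis_elem L l i \<epsilon>)) (Idx L k)"
  by (simp add: local_op_def Idx_def)

lemma mult_sum_left: "op_mult L (op_sum f I) Hm x y = (\<Sum>\<iota>\<in>I. op_mult L (f \<iota>) Hm x y)"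
  unfolding op_mult_def op_sum_def by (simp add: sum_distrib_right sum.swap[of _ "Pow (modes L)"])

lemma mult_sum_right: "op_mult L Hm (op_sum f I) x y = (\<Sum>\<iota>\<in>I. op_mult L Hm (f \<iota>) x y)"
  unfolding op_mult_def op_sum_def by (simp add: sum_distrib_left sum.swap[of _ "Pow (modes L)"])

lemma mult_smult_left: "op_mult L (op_smult c P) Hm x y = c * op_mult L P Hm x y"
  unfolding op_mult_def op_smult_def by (simp add: sum_distrib_left mult.assoc)

lemma mult_smult_right: "op_mult L Hm (op_smult c P) x y = c * op_mult L Hm P x y"
  unfolding op_mult_def op_smult_def by (simp add: sum_distrib_left mult_ac)

lemma two_point:
  fixes f :: "'a \<Rightarrow> complex" and K :: complex
  shows "finite I \<Longrightarrow> a \<in> I \<Longrightarrow> a' \<in> I \<Longrightarrow>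
  (\<Sum>x\<in>I. f x * ((if x = a then K else 0) - (if x = a' then K else 0))) = f a * K - f a' * K"
proof -
  assume a: "finite I" "a \<in> I" "a' \<in> I"
  have "(\<Sum>x\<in>I. f x * ((if x = a then K else 0) - (if x = a' then K else 0)))
      = (\<Sum>x\<in>I. (if x = a then f a * K else 0) - (if x = a' then f a' * K else 0))"
    by (rule sum.cong) (auto simp: right_diff_distrib)
  also have "\<dots> = (\<Sum>x\<in>I. (if x = a then f a * K else 0)) - (\<Sum>x\<in>I. (if x = a' then f a' * K else 0))"
    by (rule sum_subtractf)
  also have "\<dots> = f a * K - f a' * K" using a by simp
  finally show ?thesis .
qed


context chain begin

abbreviation "q \<equiv> q_label k \<sigma> b \<mu>"
definition "nxt = (if i = L then 1 else i + 1)"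

lemma nxt: "nxt \<in> {1..L}" "nxt mod L = (i+1) mod L" "nxt \<noteq> i"
  using i1 iL L3 by (auto simp: nxt_def mod_Suc)

lemma q_shaped: "j mod L = n mod L \<Longrightarrow> shaped L k \<sigma> \<mu> b n k j q"
  unfolding shaped_def q_label_def using k2 by (auto simp: cs_def)

lemma q_noFZ: "q t s \<noteq> FZ" by (auto simp: q_label_def cs_def)

lemma Wshift: "W L (i+1) k \<subseteq> W L i (k+1)"
proof
  fix m assume "m \<in> W L (i+1) k"
  then obtain t s where "t < k" "m = mode L (i+1+t) s" by (auto simp: W_def)
  then show "m \<in> W L i (k+1)" unfolding W_def by (intro CollectI exI[of _ "t+1"]) auto
qed

lemma Wmono: "W L i k \<subseteq> W L i (k+1)" unfolding W_def by (auto, metis less_SucI)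

lemma zsum: assumes sh: "shaped L k \<sigma> \<mu> b n l j \<epsilon>" and n: "n = i \<or> n = i + 1" and vl: "valid_label l \<epsilon>"
  shows "(\<Sum>\<eta>\<in>Pow M. zprod (blist L k j \<epsilon>) \<eta>) = (if \<epsilon> = q then of_nat (card (Pow M)) else 0)"
proof (cases "\<epsilon> = q")
  case True
  have "zprod (blist L k j \<epsilon>) \<eta> = 1" for \<eta>
    by (rule zprod_noFZ) (use True q_noFZ in \<open>auto simp: blist_def\<close>)
  then show ?thesis using True by simp
next
  case False
  have s: "l = k" "j mod L = n mod L" "\<epsilon> 0 \<sigma> = cs b" "\<epsilon> (k-1) \<mu> = cs (\<not> b)"
    "\<And>t s. t < k \<Longrightarrow> (t,s) \<noteq> (0,\<sigma>) \<Longrightarrow> (t,s) \<noteq> (k-1,\<mu>) \<Longrightarrow> \<epsilon> t s = FZ \<or> \<epsilon> t s = FI"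
    using sh by (auto simp: shaped_def)
  have beyond: "\<epsilon> t s = FI" if "t \<ge> k" for t s using vl s(1) that by (auto simp: valid_label_def)
  obtain t s where ts: "\<epsilon> t s \<noteq> q t s" using False by (metis ext)
  have tk: "t < k"
  proof (rule ccontr)
    assume "\<not> t < k"
    then have "\<epsilon> t s = FI" "q t s = FI" using beyond k2 by (auto simp: q_label_def)
    then show False using ts by simp
  qed
  have n0: "(t,s) \<noteq> (0,\<sigma>)" using ts s(3) by (auto simp: q_label_def)
  have n1: "(t,s) \<noteq> (k-1,\<mu>)" using ts s(4) k2 by (auto simp: q_label_def)
  have qI: "q t s = FI" using n0 n1 by (auto simp: q_label_def)
  have eZ: "\<epsilon> t s = FZ" using s(5)[OF tk n0 n1] ts qI by auto
  define m0 where "m0 = mode L (j+t) s"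
  have mem: "(FZ, m0) \<in> set (blist L k j \<epsilon>)" using blist_mem[OF tk, of \<epsilon> s L j] eZ by (simp add: m0_def)
  have m0M: "m0 \<in> M"
    using n
  proof
    assume ni: "n = i"
    have "m0 \<in> W L i k" using winpos(3)[OF Lk k2 s(2) tk, of s] ni by (simp add: m0_def)
    moreover have "m0 \<noteq> A" using winpos(1)[OF Lk k2 s(2) tk, of s \<sigma>] ni n0 by (auto simp: m0_def A_def)
    ultimately show ?thesis using Bout Wmono by (auto simp: M_def)
  next
    assume ni: "n = i + 1"
    have "m0 \<in> W L (i+1) k" using winpos(3)[OF Lk k2 s(2) tk, of s] ni by (simp add: m0_def)
    moreover have "m0 \<noteq> B" using winpos(2)[OF Lk k2 s(2) tk, of s \<mu>] ni n1 k2 by (auto simp: m0_def B_def)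
    ultimately show ?thesis using Aout Wshift by (auto simp: M_def)
  qed
  have "(\<Sum>\<eta>\<in>Pow M. zprod (blist L k j \<epsilon>) \<eta>) = 0"
    by (rule sum_flip_zero[OF m0M M_fin]) (rule zprod_flip[OF distinct_blist mem], use Lk in simp)
  then show ?thesis using False by simp
qed

end


context chain begin

definition "NN = (of_nat (card (Pow M)) :: complex)"

lemma Phi: assumes I: "(l, j, \<epsilon>) \<in> Idx L k"
  shows "(\<Sum>\<eta>\<in>Pow M. T dst src (insert src \<eta>) * (op_mult L (basis_elem L l j \<epsilon>) (hubbard L U) (xs \<eta>) (ys \<eta>)
           - op_mult L (hubbard L U) (basis_elem L l j \<epsilon>) (xs \<eta>) (ys \<eta>)))
    = (if (l, j, \<epsilon>) = (k, i, q) then kap * NN else 0) - (if (l, j, \<epsilon>) = (k, nxt, q) then kap * NN else 0)"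
proof -
  have l1: "1 \<le> l" and lk: "l \<le> k" and j: "j \<in> {1..L}" and vl: "valid_label l \<epsilon>" using I by (auto simp: Idx_def)
  define z where "z \<eta> = zprod (blist L k j \<epsilon>) \<eta>" for \<eta>
  define s1 where "s1 = shaped L k \<sigma> \<mu> b i l j \<epsilon>"
  define s2 where "s2 = shaped L k \<sigma> \<mu> b (i+1) l j \<epsilon>"
  have "(\<Sum>\<eta>\<in>Pow M. T dst src (insert src \<eta>) * (op_mult L (basis_elem L l j \<epsilon>) (hubbard L U) (xs \<eta>) (ys \<eta>)
           - op_mult L (hubbard L U) (basis_elem L l j \<epsilon>) (xs \<eta>) (ys \<eta>)))
      = (\<Sum>\<eta>\<in>Pow M. (if s1 then kap * z \<eta> else 0) - (if s2 then kap * z \<eta> else 0))"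
    by (rule sum.cong[OF refl]) (use pereta[OF l1 lk] in \<open>auto simp: z_def s1_def s2_def\<close>)
  also have "\<dots> = (if s1 then kap * (\<Sum>\<eta>\<in>Pow M. z \<eta>) else 0) - (if s2 then kap * (\<Sum>\<eta>\<in>Pow M. z \<eta>) else 0)"
    by (simp add: sum_subtractf sum_distrib_left)
  also have "\<dots> = (if (l, j, \<epsilon>) = (k, i, q) then kap * NN else 0) - (if (l, j, \<epsilon>) = (k, nxt, q) then kap * NN else 0)"
  proof -
    have e1: "(if s1 then kap * (\<Sum>\<eta>\<in>Pow M. z \<eta>) else 0) = (if (l, j, \<epsilon>) = (k, i, q) then kap * NN else 0)"
    proof (cases s1)
      case True
      then have zs: "(\<Sum>\<eta>\<in>Pow M. z \<eta>) = (if \<epsilon> = q then NN else 0)"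
        using zsum[of i l j \<epsilon>] vl by (simp add: z_def s1_def NN_def)
      have "l = k" "j mod L = i mod L" using True by (auto simp: s1_def shaped_def)
      then have "l = k" "j = i" using modL_eq[of j L i] j i1 iL by auto
      then show ?thesis using True zs by auto
    next
      case False
      have "(l, j, \<epsilon>) \<noteq> (k, i, q)" using False q_shaped[of i i] by (auto simp: s1_def)
      then show ?thesis using False by auto
    qed
    have e2: "(if s2 then kap * (\<Sum>\<eta>\<in>Pow M. z \<eta>) else 0) = (if (l, j, \<epsilon>) = (k, nxt, q) then kap * NN else 0)"
    proof (cases s2)
      case True
      then have zs: "(\<Sum>\<eta>\<in>Pow M. z \<eta>) = (if \<epsilon> = q then NN else 0)"
        using zsum[of "i+1" l j \<epsilon>] vl by (simp add: z_def s2_def NN_def)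
      have "l = k" "j mod L = nxt mod L" using True nxt by (auto simp: s2_def shaped_def)
      then have "l = k" "j = nxt" using modL_eq[of j L nxt] j nxt by auto
      then show ?thesis using True zs by auto
    next
      case False
      have "(l, j, \<epsilon>) \<noteq> (k, nxt, q)" using False q_shaped[of nxt "i+1"] nxt by (auto simp: s2_def)
      then show ?thesis using False by auto
    qed
    show ?thesis unfolding e1 e2 ..
  qed
  finally show ?thesis .
qed

lemma local_mult_left: "op_mult L (local_op L k coef) Hm x y =
    (\<Sum>\<iota>\<in>Idx L k. coef (fst \<iota>) (fst (snd \<iota>)) (snd (snd \<iota>)) * op_mult L (basis_elem L (fst \<iota>) (fst (snd \<iota>)) (snd (snd \<iota>))) Hm x y)"
  by (simp add: local_op_Idx mult_sum_left case_prod_beta mult_smult_left)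

lemma local_mult_right: "op_mult L Hm (local_op L k coef) x y =
    (\<Sum>\<iota>\<in>Idx L k. coef (fst \<iota>) (fst (snd \<iota>)) (snd (snd \<iota>)) * op_mult L Hm (basis_elem L (fst \<iota>) (fst (snd \<iota>)) (snd (snd \<iota>))) x y)"
  by (simp add: local_op_Idx mult_sum_right case_prod_beta mult_smult_right)

lemma kapNN: "kap * NN \<noteq> 0"
proof -
  have "kap \<noteq> 0" by (auto simp: kap_def wtau_def)
  moreover have "card (Pow M) \<noteq> 0" using M_fin by (simp add: card_Pow)
  ultimately show ?thesis by (simp add: NN_def)
qed

lemma main_step: assumes cons: "is_conserved_local L U k coef"
  shows "coef k i q = coef k nxt q"
proof -
  define F where "F = local_op L k coef"
  define H where "H = hubbard L U"
  define c where "c \<iota> = coef (fst \<iota>) (fst (snd \<iota>)) (snd (snd \<iota>))" for \<iota>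
  define P where "P \<iota> = basis_elem L (fst \<iota>) (fst (snd \<iota>)) (snd (snd \<iota>))" for \<iota>
  define s where "s \<eta> = T dst src (insert src \<eta>)" for \<eta>
  define Phi where "Phi \<iota> = (\<Sum>\<eta>\<in>Pow M. s \<eta> * (op_mult L (P \<iota>) H (xs \<eta>) (ys \<eta>) - op_mult L H (P \<iota>) (xs \<eta>) (ys \<eta>)))" for \<iota>
  have comm: "op_mult L F H = op_mult L H F" using cons by (simp add: is_conserved_local_def F_def H_def)
  have "0 = (\<Sum>\<eta>\<in>Pow M. s \<eta> * (op_mult L F H (xs \<eta>) (ys \<eta>) - op_mult L H F (xs \<eta>) (ys \<eta>)))"
    using comm by simp
  also have "\<dots> = (\<Sum>\<eta>\<in>Pow M. \<Sum>\<iota>\<in>Idx L k. c \<iota> * (s \<eta> * (op_mult L (P \<iota>) H (xs \<eta>) (ys \<eta>) - op_mult L H (P \<iota>) (xs \<eta>) (ys \<eta>))))"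
    unfolding F_def local_mult_left local_mult_right c_def[symmetric] P_def[symmetric]
    by (simp add: sum_subtractf[symmetric] sum_distrib_left algebra_simps)
  also have "\<dots> = (\<Sum>\<iota>\<in>Idx L k. c \<iota> * Phi \<iota>)"
    unfolding Phi_def by (simp add: sum.swap[of _ "Pow M"] sum_distrib_left)
  also have "\<dots> = (\<Sum>\<iota>\<in>Idx L k. c \<iota> * ((if \<iota> = (k, i, q) then kap * NN else 0) - (if \<iota> = (k, nxt, q) then kap * NN else 0)))"
  proof (rule sum.cong[OF refl])
    fix \<iota> assume "\<iota> \<in> Idx L k"
    then obtain l j \<epsilon> where e: "\<iota> = (l, j, \<epsilon>)" "(l, j, \<epsilon>) \<in> Idx L k" by (metis prod_cases3)
    show "c \<iota> * Phi \<iota> = c \<iota> * ((if \<iota> = (k, i, q) then kap * NN else 0) - (if \<iota> = (k, nxt, q) then kap * NN else 0))"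
      using Phi[OF e(2)] unfolding Phi_def e(1) s_def P_def H_def by simp
  qed
  also have "\<dots> = c (k, i, q) * (kap * NN) - c (k, nxt, q) * (kap * NN)"
  proof (rule two_point[OF finite_Idx])
    have vq: "valid_label k q" using k2 by (cases \<sigma>; cases \<mu>) (auto simp: valid_label_def q_label_def cs_def)
    show "(k, i, q) \<in> Idx L k" using vq k2 i1 iL by (auto simp: Idx_def)
    show "(k, nxt, q) \<in> Idx L k" using vq k2 nxt by (auto simp: Idx_def)
  qed
  finally have "(c (k, i, q) - c (k, nxt, q)) * (kap * NN) = 0" by (simp add: algebra_simps) metis
  then show ?thesis using kapNN by (simp add: c_def)
qed

end

theorem lemma5:
  fixes L k :: nat and U :: real
    and coef :: "nat \<Rightarrow> nat \<Rightarrow> (nat \<Rightarrow> spin \<Rightarrow> fop) \<Rightarrow> complex"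
  assumes "U \<noteq> 0" and "2 \<le> k" and "k < L div 2"
    and "is_conserved_local L U k coef"
  shows "\<forall>\<sigma> \<mu> b. \<forall>i\<in>{1..L}. \<forall>i'\<in>{1..L}.
           coef k i (q_label k \<sigma> b \<mu>) = coef k i' (q_label k \<sigma> b \<mu>)"
proof (intro allI ballI)
  fix \<sigma> \<mu> b i i'
  assume i: "i \<in> {1..L}" and i': "i' \<in> {1..L}"
  have Lk: "2*k+2 \<le> L" using assms(3) by linarith
  have step: "coef k n (q_label k \<sigma> b \<mu>) = coef k (n+1) (q_label k \<sigma> b \<mu>)" if "1 \<le> n" "n < L" for n
  proof -
    interpret chain L k U \<sigma> \<mu> b n by unfold_locales (use assms(2) Lk that in auto)
    have "coef k n q = coef k nxt q" by (rule main_step[OF assms(4)])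
    then show ?thesis using that by (simp add: nxt_def)
  qed
  have all: "coef k n (q_label k \<sigma> b \<mu>) = coef k 1 (q_label k \<sigma> b \<mu>)" if "1 \<le> n" "n \<le> L" for n
    using that
  proof (induction n)
    case 0 thus ?case by simp
  next
    case (Suc n)
    show ?case
    proof (cases "n = 0")
      case True thus ?thesis by simp
    next
      case False
      then have "coef k n (q_label k \<sigma> b \<mu>) = coef k 1 (q_label k \<sigma> b \<mu>)" using Suc by auto
      moreover have "coef k n (q_label k \<sigma> b \<mu>) = coef k (n+1) (q_label k \<sigma> b \<mu>)" using step[of n] False Suc by auto
      ultimately show ?thesis by simp
    qed
  qed
  show "coef k i (q_label k \<sigma> b \<mu>) = coef k i' (q_label k \<sigma> b \<mu>)"
    using all[of i] all[of i'] i i' by auto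
qed


end
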